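(* Let $A=F/I$ where $I\subset F$ is a two-sided ideal generated by finitely many monomials, and let $M\subset\bigoplus_{i=1}^rA[-\delta_i]$ be a finitely generated monomial right submodule. Then $N=\bigoplus_iA[-\delta_i]/M$ has a minimal graded free right resolution in which every right syzygy module $M_i$ ($i\ge1$, with $M_1=M$) is finitely generated and monomial. Moreover, if $b_k(I)=0$ for all $k>d$ and $b_k(M)=0$ for all $k>\Delta$, then $b_k(M_i)=0$ for all $k>\Delta+(i-1)(d-1)$ and all $i\ge1$. (Such a resolution need not have finite length.)
   Context: $\mathbb K$ is a field, $F=\mathbb K\langle x_1,\dots,x_n\rangle$ the free associative algebra with standard grading and $W$ its set of monomials. $A[-\delta]_e=A_{e-\delta}$; $\bigoplus_iA[-\delta_i]$ is the graded free right $A$-module with basis $e_i$ of degree $\delta_i$. A right submodule of a graded free module $\bigoplus_jA[-\Delta_j]$ (basis $\epsilon_j$) is monomial if it is generated by elements of the form $\epsilon_j(w+I)$ with $w\in W$. A graded free right resolution of $N$ is an exact sequence $0\leftarrow N\leftarrow\bigoplus_iA[-\delta_i]\leftarrow\bigoplus_jA[-\delta'_j]\leftarrow\cdots$ of graded right module homomorphisms; $M_i$ is the kernel of the $(i+1)$-th map (so $M_0=N$, $M_1=M$), and the resolution is minimal if the images of the canonical bases are minimal homogeneous bases of the $M_i$. $b_k(\cdot)$ denotes the number of degree-$k$ elements in a minimal homogeneous basis (for $I$, as a two-sided ideal of $F$). *)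

theory Defs
  imports Main
begin

text \<open>
The variables of F = K<x_1,...,x_n> are indexed 0..n-1; a monomial (word)
is a list of such indices. An element of F is a finitely supported function
nat list => 'k. An element of the graded free right F-module with basis indexed by a
set J is a finitely supported function nat => nat list => 'k (coefficient of e_j w).
Since A = F/I, a right A-submodule X of a free A-module  (+)_{j in J} A[-D j]  is
represented by its full preimage in  (+)_{j in J} F, i.e. an F-submodule containing
Ipart = (+)_j e_j I; elements of the A-module are represented by lifts.
\<close>

definition isF :: "nat \<Rightarrow> (nat list \<Rightarrow> 'k::field) \<Rightarrow> bool" where
  "isF n f \<longleftrightarrow> finite {w. f w \<noteq> 0} \<and> (\<forall>w. f w \<noteq> 0 \<longrightarrow> set w \<subseteq> {..<n})"

definition isFree :: "nat \<Rightarrow> nat set \<Rightarrow> (nat \<Rightarrow> nat list \<Rightarrow> 'k::field) \<Rightarrow> bool" where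
  "isFree n J x \<longleftrightarrow> finite {(j, w). x j w \<noteq> 0} \<and>
     (\<forall>j w. x j w \<noteq> 0 \<longrightarrow> j \<in> J \<and> set w \<subseteq> {..<n})"

definition fmul :: "(nat list \<Rightarrow> 'k::field) \<Rightarrow> (nat list \<Rightarrow> 'k) \<Rightarrow> nat list \<Rightarrow> 'k" where
  "fmul f g w = (\<Sum>m\<in>{0..length w}. f (take m w) * g (drop m w))"

definition ract :: "(nat \<Rightarrow> nat list \<Rightarrow> 'k::field) \<Rightarrow> (nat list \<Rightarrow> 'k) \<Rightarrow> nat \<Rightarrow> nat list \<Rightarrow> 'k" where
  "ract x f i w = (\<Sum>m\<in>{0..length w}. x i (take m w) * f (drop m w))"

definition mono :: "nat list \<Rightarrow> nat list \<Rightarrow> 'k::field" where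
  "mono w = (\<lambda>u. if u = w then 1 else 0)"

definition vec :: "nat \<Rightarrow> nat list \<Rightarrow> nat \<Rightarrow> nat list \<Rightarrow> 'k::field" where
  "vec j w = (\<lambda>i u. if i = j \<and> u = w then 1 else 0)"

inductive_set tideal :: "nat \<Rightarrow> (nat list \<Rightarrow> 'k::field) set \<Rightarrow> (nat list \<Rightarrow> 'k) set"
  for n S where
  gen: "a \<in> S \<Longrightarrow> a \<in> tideal n S"
| zero: "(\<lambda>_. 0) \<in> tideal n S"
| add: "a \<in> tideal n S \<Longrightarrow> b \<in> tideal n S \<Longrightarrow> (\<lambda>w. a w + b w) \<in> tideal n S"
| lmul: "a \<in> tideal n S \<Longrightarrow> isF n f \<Longrightarrow> fmul f a \<in> tideal n S"
| rmul: "a \<in> tideal n S \<Longrightarrow> isF n f \<Longrightarrow> fmul a f \<in> tideal n S"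

inductive_set rsub :: "nat \<Rightarrow> (nat \<Rightarrow> nat list \<Rightarrow> 'k::field) set \<Rightarrow> (nat \<Rightarrow> nat list \<Rightarrow> 'k) set"
  for n S where
  gen: "x \<in> S \<Longrightarrow> x \<in> rsub n S"
| zero: "(\<lambda>_ _. 0) \<in> rsub n S"
| add: "x \<in> rsub n S \<Longrightarrow> y \<in> rsub n S \<Longrightarrow> (\<lambda>i w. x i w + y i w) \<in> rsub n S"
| rmul: "x \<in> rsub n S \<Longrightarrow> isF n f \<Longrightarrow> ract x f \<in> rsub n S"

text \<open>(+)_{j in J} e_j I, the kernel of (+)_j F -> (+)_j A.\<close>
definition Ipart :: "nat \<Rightarrow> nat set \<Rightarrow> (nat list \<Rightarrow> 'k::field) set \<Rightarrow> (nat \<Rightarrow> nat list \<Rightarrow> 'k) set" where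
  "Ipart n J I = {x. isFree n J x \<and> (\<forall>j. x j \<in> I)}"

definition homogF :: "int \<Rightarrow> (nat list \<Rightarrow> 'k::field) \<Rightarrow> bool" where
  "homogF e f \<longleftrightarrow> (\<forall>w. f w \<noteq> 0 \<longrightarrow> int (length w) = e)"

definition homog :: "(nat \<Rightarrow> int) \<Rightarrow> int \<Rightarrow> (nat \<Rightarrow> nat list \<Rightarrow> 'k::field) \<Rightarrow> bool" where
  "homog D e x \<longleftrightarrow> (\<forall>j w. x j w \<noteq> 0 \<longrightarrow> D j + int (length w) = e)"

definition minbasis_ideal :: "nat \<Rightarrow> (nat list \<Rightarrow> 'k::field) set \<Rightarrow> (nat list \<Rightarrow> 'k) set \<Rightarrow> bool" where
  "minbasis_ideal n I B \<longleftrightarrow> B \<subseteq> {f. isF n f} \<and> (\<forall>b\<in>B. \<exists>e. homogF e b) \<and>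
     I = tideal n B \<and> (\<forall>b\<in>B. b \<notin> tideal n (B - {b}))"

definition bI :: "nat \<Rightarrow> int \<Rightarrow> (nat list \<Rightarrow> 'k::field) set \<Rightarrow> nat" where
  "bI n k I = card {b \<in> (SOME B. minbasis_ideal n I B). homogF k b}"

text \<open>B (a set of homogeneous lifts) is a minimal homogeneous basis of the A-submodule
  represented by X in (+)_{j in J} A[-D j].\<close>
definition minbasis :: "nat \<Rightarrow> nat set \<Rightarrow> (nat \<Rightarrow> int) \<Rightarrow> (nat list \<Rightarrow> 'k::field) set
    \<Rightarrow> (nat \<Rightarrow> nat list \<Rightarrow> 'k) set \<Rightarrow> (nat \<Rightarrow> nat list \<Rightarrow> 'k) set \<Rightarrow> bool" where
  "minbasis n J D I X B \<longleftrightarrow> B \<subseteq> {x. isFree n J x} \<and> (\<forall>b\<in>B. \<exists>e. homog D e b) \<and>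
     X = rsub n (B \<union> Ipart n J I) \<and> (\<forall>b\<in>B. b \<notin> rsub n ((B - {b}) \<union> Ipart n J I))"

definition bM :: "nat \<Rightarrow> nat set \<Rightarrow> (nat \<Rightarrow> int) \<Rightarrow> (nat list \<Rightarrow> 'k::field) set
    \<Rightarrow> int \<Rightarrow> (nat \<Rightarrow> nat list \<Rightarrow> 'k) set \<Rightarrow> nat" where
  "bM n J D I k X = card {b \<in> (SOME B. minbasis n J D I X B). homog D k b}"

definition monomial_sub :: "nat \<Rightarrow> nat set \<Rightarrow> (nat list \<Rightarrow> 'k::field) set
    \<Rightarrow> (nat \<Rightarrow> nat list \<Rightarrow> 'k) set \<Rightarrow> bool" where
  "monomial_sub n J I X \<longleftrightarrow> (\<exists>S \<subseteq> {(j, w). j \<in> J \<and> set w \<subseteq> {..<n}}.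
     X = rsub n ((\<lambda>(j, w). vec j w) ` S \<union> Ipart n J I))"

definition fg_sub :: "nat \<Rightarrow> nat set \<Rightarrow> (nat list \<Rightarrow> 'k::field) set
    \<Rightarrow> (nat \<Rightarrow> nat list \<Rightarrow> 'k) set \<Rightarrow> bool" where
  "fg_sub n J I X \<longleftrightarrow> (\<exists>S. finite S \<and> S \<subseteq> {x. isFree n J x} \<and> X = rsub n (S \<union> Ipart n J I))"

definition monomial_ideal_fg :: "nat \<Rightarrow> (nat list \<Rightarrow> 'k::field) set \<Rightarrow> bool" where
  "monomial_ideal_fg n I \<longleftrightarrow> (\<exists>G. finite G \<and> (\<forall>w\<in>G. set w \<subseteq> {..<n}) \<and> I = tideal n (mono ` G))"

definition dmap :: "nat set \<Rightarrow> (nat \<Rightarrow> nat \<Rightarrow> nat list \<Rightarrow> 'k::field)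
    \<Rightarrow> (nat \<Rightarrow> nat list \<Rightarrow> 'k) \<Rightarrow> nat \<Rightarrow> nat list \<Rightarrow> 'k" where
  "dmap J g x = (\<lambda>i w. \<Sum>j\<in>{j\<in>J. \<exists>u. x j u \<noteq> 0}. ract (g j) (x j) i w)"

text \<open>Resolution data: P_k = (+)_{j in J k} A[-D k j] (k >= 0), and for k >= 1 the map
  P_k -> P_{k-1} sends e_j to g k j. P_0 -> N is the canonical projection.
  Msyz k (k >= 1) is the image of P_k -> P_{k-1}, i.e. the syzygy module M_k.\<close>
definition Msyz :: "nat \<Rightarrow> (nat list \<Rightarrow> 'k::field) set \<Rightarrow> (nat \<Rightarrow> nat set)
    \<Rightarrow> (nat \<Rightarrow> nat \<Rightarrow> nat \<Rightarrow> nat list \<Rightarrow> 'k) \<Rightarrow> nat \<Rightarrow> (nat \<Rightarrow> nat list \<Rightarrow> 'k) set" where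
  "Msyz n I J g k = rsub n (g k ` J k \<union> Ipart n (J (k - 1)) I)"

definition graded_free_res :: "nat \<Rightarrow> (nat list \<Rightarrow> 'k::field) set \<Rightarrow> (nat \<Rightarrow> nat set)
    \<Rightarrow> (nat \<Rightarrow> nat \<Rightarrow> int) \<Rightarrow> (nat \<Rightarrow> nat \<Rightarrow> nat \<Rightarrow> nat list \<Rightarrow> 'k)
    \<Rightarrow> (nat \<Rightarrow> nat list \<Rightarrow> 'k) set \<Rightarrow> bool" where
  "graded_free_res n I J D g M \<longleftrightarrow>
     (\<forall>k\<ge>1. \<forall>j\<in>J k. isFree n (J (k - 1)) (g k j) \<and> homog (D (k - 1)) (D k j) (g k j)) \<and>
     Msyz n I J g 1 = M \<and>
     (\<forall>k\<ge>1. Msyz n I J g (Suc k) =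
        {x. isFree n (J k) x \<and> dmap (J k) (g k) x \<in> Ipart n (J (k - 1)) I})"

definition minimal_res :: "nat \<Rightarrow> (nat list \<Rightarrow> 'k::field) set \<Rightarrow> (nat \<Rightarrow> nat set)
    \<Rightarrow> (nat \<Rightarrow> nat \<Rightarrow> int) \<Rightarrow> (nat \<Rightarrow> nat \<Rightarrow> nat \<Rightarrow> nat list \<Rightarrow> 'k) \<Rightarrow> bool" where
  "minimal_res n I J D g \<longleftrightarrow> (\<forall>k\<ge>1. inj_on (g k) (J k) \<and>
     minbasis n (J (k - 1)) (D (k - 1)) I (Msyz n I J g k) (g k ` J k))"

end

theory Submission
  imports Defs "HOL-Library.Function_Algebras" HOL.Vector_Spaces
begin


definition scl :: "'k::field \<Rightarrow> ('p \<Rightarrow> 'k) \<Rightarrow> 'p \<Rightarrow> 'k" where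
  "scl c f = (\<lambda>x. c * f x)"

interpretation fvs: vector_space "scl :: 'k::field \<Rightarrow> ('p \<Rightarrow> 'k) \<Rightarrow> 'p \<Rightarrow> 'k"
  by unfold_locales (auto simp: scl_def algebra_simps fun_eq_iff)

definition unitv :: "'p \<Rightarrow> 'p \<Rightarrow> 'k::field" where
  "unitv p = (\<lambda>q. if q = p then 1 else 0)"

lemma sum_fun_apply: "finite S \<Longrightarrow> (\<Sum>v\<in>S. f v) x = (\<Sum>v\<in>S. f v x)"
  by (induction S rule: finite_induct) auto

lemma count_lemma:
  fixes \<pi> :: "'v \<Rightarrow> 'p \<Rightarrow> 'k::field"
  assumes fin: "finite Mk"
    and supp: "\<And>b p. b \<in> Bk \<Longrightarrow> p \<notin> Mk \<Longrightarrow> \<pi> b p = 0"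
    and sp: "\<And>p. p \<in> Mk \<Longrightarrow> unitv p \<in> fvs.span (\<pi> ` Bk)"
    and ind: "\<And>b. b \<in> Bk \<Longrightarrow> \<pi> b \<notin> fvs.span (\<pi> ` (Bk - {b}))"
  shows "finite Bk \<and> card Bk = card Mk"
proof -
  have inj: "inj_on \<pi> Bk"
  proof (rule inj_onI, rule ccontr)
    fix x y assume xy: "x \<in> Bk" "y \<in> Bk" "\<pi> x = \<pi> y" "x \<noteq> y"
    then have "\<pi> x \<in> fvs.span (\<pi> ` (Bk - {x}))" by (auto intro!: fvs.span_base)
    with ind xy show False by blast
  qed
  have indep: "fvs.independent (\<pi> ` Bk)"
    unfolding fvs.dependent_def
  proof safe
    fix b assume b: "b \<in> Bk" and s: "\<pi> b \<in> fvs.span (\<pi> ` Bk - {\<pi> b})"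
    have "\<pi> ` Bk - {\<pi> b} \<subseteq> \<pi> ` (Bk - {b})" by auto
    then have "\<pi> b \<in> fvs.span (\<pi> ` (Bk - {b}))" using s fvs.span_mono by blast
    with ind b show False by blast
  qed
  let ?E = "unitv ` Mk :: ('p \<Rightarrow> 'k) set"
  have injE: "inj_on (unitv :: 'p \<Rightarrow> 'p \<Rightarrow> 'k) Mk"
    by (rule inj_onI) (auto simp: unitv_def fun_eq_iff split: if_splits)
  have cE: "card ?E = card Mk" using card_image[OF injE] .
  have "\<pi> ` Bk \<subseteq> fvs.span ?E"
  proof
    fix v assume "v \<in> \<pi> ` Bk"
    then obtain b where b: "b \<in> Bk" "v = \<pi> b" by auto
    have eq: "v = (\<Sum>p\<in>Mk. scl (\<pi> b p) (unitv p))"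
    proof
      fix q
      show "v q = (\<Sum>p\<in>Mk. scl (\<pi> b p) (unitv p)) q"
        using fin supp[OF b(1), of q] b(2)
        by (cases "q \<in> Mk") (simp_all add: sum_fun_apply scl_def unitv_def if_distrib[of "\<lambda>x. _ * x"] sum.delta cong: if_cong)
    qed
    show "v \<in> fvs.span ?E" unfolding eq
      by (intro fvs.span_sum fvs.span_scale fvs.span_base) auto
  qed
  from fvs.independent_span_bound[OF finite_imageI[OF fin] indep this]
  have f1: "finite (\<pi> ` Bk)" "card (\<pi> ` Bk) \<le> card Mk" using cE by auto
  have indE: "fvs.independent ?E"
    unfolding fvs.independent_explicit_finite_subsets
  proof (intro allI impI ballI)
    fix S u v assume S: "S \<subseteq> ?E" "finite S" and z: "(\<Sum>v\<in>S. scl (u v) v) = 0" and v: "v \<in> S"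
    then obtain p where p: "p \<in> Mk" "v = unitv p" by auto
    have "0 = (\<Sum>w\<in>S. scl (u w) w) p" using z by simp
    also have "\<dots> = (\<Sum>w\<in>S. u w * w p)" using S(2) by (simp add: sum_fun_apply scl_def)
    also have "\<dots> = u v"
    proof -
      have "(\<Sum>w\<in>S. u w * w p) = (\<Sum>w\<in>S. if w = v then u v else 0)"
      proof (rule sum.cong[OF refl])
        fix w assume "w \<in> S"
        with S(1) obtain q where q: "w = unitv q" by auto
        show "u w * w p = (if w = v then u v else 0)"
          using p q by (cases "q = p") (auto simp: unitv_def dest: fun_cong[of _ _ p])
      qed
      also have "\<dots> = u v" using S(2) v by simp
      finally show ?thesis .
    qed
    finally show "u v = 0" by simp
  qed
  have "?E \<subseteq> fvs.span (\<pi> ` Bk)" using sp by auto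
  from fvs.independent_span_bound[OF f1(1) indE this]
  have "card Mk \<le> card (\<pi> ` Bk)" using cE by simp
  with f1 have "card (\<pi> ` Bk) = card Mk" by simp
  moreover have "finite Bk" using f1(1) inj finite_image_iff by blast
  ultimately show ?thesis using card_image[OF inj] by simp
qed



definition cmono :: "'k::field \<Rightarrow> nat list \<Rightarrow> nat list \<Rightarrow> 'k" where
  "cmono c a = (\<lambda>u. if u = a then c else 0)"

definition cvec :: "'k::field \<Rightarrow> nat \<Rightarrow> nat list \<Rightarrow> nat \<Rightarrow> nat list \<Rightarrow> 'k" where
  "cvec c j a = (\<lambda>i u. if i = j \<and> u = a then c else 0)"

lemma take_eq_iff_aux:
  assumes "m \<le> length w" shows "(take m w = a) \<longleftrightarrow> (m = length a \<and> take (length a) w = a)"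
proof -
  have "take m w = a \<Longrightarrow> length a = m" using assms by auto
  then show ?thesis by auto
qed

lemma take_len: "take m w = a \<Longrightarrow> m \<le> length w \<Longrightarrow> m = length a"
  by auto

lemma sum_single_m:
  fixes N k :: nat
  assumes "\<And>m. m \<in> {0..N} \<Longrightarrow> m \<noteq> k \<Longrightarrow> h m = 0"
  shows "(\<Sum>m\<in>{0..N}. h m) = (if k \<le> N then h k else 0)"
proof -
  have "(\<Sum>m\<in>{0..N}. h m) = (\<Sum>m\<in>{0..N}. if m = k then h k else 0)"
    using assms by (intro sum.cong) auto
  also have "\<dots> = (\<Sum>m\<in>{0..N}. if m = k then h m else 0)" by (intro sum.cong) auto
  also have "\<dots> = (if k \<le> N then h k else 0)" by (subst sum.delta) auto
  finally show ?thesis .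
qed

lemma fmul_cmono_left:
  "fmul (cmono c a) g w = (if length a \<le> length w \<and> take (length a) w = a then c * g (drop (length a) w) else 0)"
  unfolding fmul_def cmono_def
  by (subst sum_single_m[where k="length a"]) (auto dest: take_len)

lemma ract_vec_left:
  "ract (vec j a) g i w = (if i = j \<and> length a \<le> length w \<and> take (length a) w = a then g (drop (length a) w) else 0)"
  unfolding ract_def vec_def
  by (subst sum_single_m[where k="length a"]) (auto dest: take_len)

lemma ract_cvec_left:
  "ract (cvec c j a) g i w = (if i = j \<and> length a \<le> length w \<and> take (length a) w = a then c * g (drop (length a) w) else 0)"
  unfolding ract_def cvec_def
  by (subst sum_single_m[where k="length a"]) (auto dest: take_len)

lemma fmul_cmono_nil_right: "fmul f (cmono c []) w = f w * c"
  unfolding fmul_def cmono_def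
  by (subst sum_single_m[where k="length w"]) auto

lemma ract_cmono_nil_right: "ract x (cmono c []) i w = x i w * c"
  unfolding ract_def cmono_def
  by (subst sum_single_m[where k="length w"]) auto

lemma sum_nz: "(\<Sum>m\<in>A. h m) \<noteq> 0 \<Longrightarrow> \<exists>m\<in>A. h m \<noteq> 0"
  by (meson sum.neutral)

lemma fmul_nz: "fmul f g w \<noteq> 0 \<Longrightarrow> \<exists>u v. w = u @ v \<and> f u \<noteq> 0 \<and> g v \<noteq> 0"
  unfolding fmul_def by (drule sum_nz) (metis append_take_drop_id mult_zero_left mult_zero_right)

lemma ract_nz: "ract x f i w \<noteq> 0 \<Longrightarrow> \<exists>u v. w = u @ v \<and> x i u \<noteq> 0 \<and> f v \<noteq> 0"
  unfolding ract_def by (drule sum_nz) (metis append_take_drop_id mult_zero_left mult_zero_right)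

lemma isF_fmul:
  assumes "isF n f" "isF n g" shows "isF n (fmul f g)"
proof -
  have "{w. fmul f g w \<noteq> 0} \<subseteq> (\<lambda>(u,v). u @ v) ` ({u. f u \<noteq> 0} \<times> {v. g v \<noteq> 0})"
    by (auto dest!: fmul_nz)
  moreover have "finite ((\<lambda>(u,v). u @ v) ` ({u. f u \<noteq> 0} \<times> {v. g v \<noteq> 0}))"
    using assms unfolding isF_def by auto
  moreover have "\<forall>w. fmul f g w \<noteq> 0 \<longrightarrow> set w \<subseteq> {..<n}"
  proof (intro allI impI)
    fix w assume "fmul f g w \<noteq> 0"
    then obtain u v where "w = u @ v" "f u \<noteq> 0" "g v \<noteq> 0" using fmul_nz by blast
    then show "set w \<subseteq> {..<n}" using assms unfolding isF_def by auto
  qed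
  ultimately show ?thesis unfolding isF_def by (auto intro: finite_subset)
qed

lemma isFree_ract:
  assumes "isFree n J x" "isF n g" shows "isFree n J (ract x g)"
proof -
  have "{(i, w). ract x g i w \<noteq> 0} \<subseteq> (\<lambda>((i,u),v). (i, u @ v)) ` ({(i, u). x i u \<noteq> 0} \<times> {v. g v \<noteq> 0})"
    by (force dest!: ract_nz)
  moreover have "finite ((\<lambda>((i,u),v). (i, u @ v)) ` ({(i, u). x i u \<noteq> 0} \<times> {v. g v \<noteq> 0}))"
    using assms unfolding isF_def isFree_def by auto
  moreover have "\<forall>i w. ract x g i w \<noteq> 0 \<longrightarrow> i \<in> J \<and> set w \<subseteq> {..<n}"
  proof (intro allI impI)
    fix i w assume "ract x g i w \<noteq> 0"
    then obtain u v where "w = u @ v" "x i u \<noteq> 0" "g v \<noteq> 0" using ract_nz by blast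
    then show "i \<in> J \<and> set w \<subseteq> {..<n}" using assms unfolding isF_def isFree_def by auto
  qed
  ultimately show ?thesis unfolding isFree_def by (auto intro: finite_subset)
qed

lemma isF_add: "isF n a \<Longrightarrow> isF n b \<Longrightarrow> isF n (\<lambda>w. a w + b w)"
  unfolding isF_def
  apply (intro conjI)
   apply (rule finite_subset[of _ "{w. a w \<noteq> 0} \<union> {w. b w \<noteq> 0}"]; force)
  by (metis add.left_neutral add_0_right)

lemma isFree_add: "isFree n J a \<Longrightarrow> isFree n J b \<Longrightarrow> isFree n J (\<lambda>i w. a i w + b i w)"
  unfolding isFree_def
  apply (intro conjI)
   apply (rule finite_subset[of _ "{(i,w). a i w \<noteq> 0} \<union> {(i,w). b i w \<noteq> 0}"]; force)
  by (metis add.left_neutral add_0_right)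

lemma isF_cmono: "set a \<subseteq> {..<n} \<Longrightarrow> isF n (cmono c a)"
  unfolding isF_def cmono_def by (auto intro: finite_subset[of _ "{a}"])

lemma mono_cmono: "mono = cmono 1"
  unfolding mono_def cmono_def by (auto simp: fun_eq_iff)

lemma vec_cvec: "vec = cvec 1"
  unfolding vec_def cvec_def by (auto simp: fun_eq_iff)

lemma isFree_cvec: "j \<in> J \<Longrightarrow> set a \<subseteq> {..<n} \<Longrightarrow> isFree n J (cvec c j a)"
  unfolding isFree_def cvec_def by (auto intro: finite_subset[of _ "{(j,a)}"])

lemma decomp_F:
  assumes "finite S" "{w. f w \<noteq> 0} \<subseteq> S"
  shows "f = (\<lambda>u. \<Sum>w\<in>S. cmono (f w) w u)"
proof
  fix u show "f u = (\<Sum>w\<in>S. cmono (f w) w u)"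
    using assms by (cases "u \<in> S") (auto simp: cmono_def sum.delta)
qed

lemma decomp_M:
  assumes "finite S" "{(j,w). x j w \<noteq> 0} \<subseteq> S"
  shows "x = (\<lambda>i u. \<Sum>p\<in>S. cvec (x (fst p) (snd p)) (fst p) (snd p) i u)"
proof (intro ext)
  fix i u
  have "(\<Sum>p\<in>S. cvec (x (fst p) (snd p)) (fst p) (snd p) i u) = (\<Sum>p\<in>S. if p = (i,u) then x i u else 0)"
    by (intro sum.cong) (auto simp: cvec_def)
  then show "x i u = (\<Sum>p\<in>S. cvec (x (fst p) (snd p)) (fst p) (snd p) i u)"
    using assms by (cases "(i,u) \<in> S") (auto simp: sum.delta)
qed

lemma tideal_sum:
  assumes "finite S" "\<And>w. w \<in> S \<Longrightarrow> h w \<in> tideal n G"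
  shows "(\<lambda>u. \<Sum>w\<in>S. h w u) \<in> tideal n G"
  using assms
proof (induction S rule: finite_induct)
  case empty then show ?case by (simp add: tideal.zero)
next
  case (insert x F) then show ?case by (simp add: tideal.add)
qed

lemma rsub_sum:
  assumes "finite S" "\<And>w. w \<in> S \<Longrightarrow> h w \<in> rsub n G"
  shows "(\<lambda>i u. \<Sum>w\<in>S. h w i u) \<in> rsub n G"
  using assms
proof (induction S rule: finite_induct)
  case empty then show ?case by (simp add: rsub.zero)
next
  case (insert x F) then show ?case by (simp add: rsub.add)
qed

lemma rsub_mono: "x \<in> rsub n A \<Longrightarrow> A \<subseteq> B \<Longrightarrow> x \<in> rsub n B"
  by (induction x rule: rsub.induct) (auto intro: rsub.intros)

lemma tideal_mono: "x \<in> tideal n A \<Longrightarrow> A \<subseteq> B \<Longrightarrow> x \<in> tideal n B"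
  by (induction x rule: tideal.induct) (auto intro: tideal.intros)

lemma cmono_eq: "cmono c w = fmul (cmono c []) (mono w)"
  unfolding fun_eq_iff mono_cmono fmul_cmono_left by (auto simp: cmono_def)

lemma cvec_eq: "cvec c j w = ract (vec j w) (cmono c [])"
  unfolding fun_eq_iff ract_vec_left by (auto simp: cvec_def cmono_def vec_def)

lemma vec_app: "vec j (u @ v) = ract (vec j u) (mono v)"
  unfolding fun_eq_iff ract_vec_left by (auto simp: vec_def mono_def) (metis append_take_drop_id)

lemma mono_app: "mono (u @ v) = fmul (mono u) (mono v)"
  unfolding fun_eq_iff mono_cmono fmul_cmono_left by (auto simp: cmono_def) (metis append_take_drop_id)



definition IW :: "nat list set \<Rightarrow> nat list set" where
  "IW G = {w. \<exists>a t c. t \<in> G \<and> w = a @ t @ c}"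

definition FI :: "nat \<Rightarrow> nat list set \<Rightarrow> (nat list \<Rightarrow> 'k::field) set" where
  "FI n G = {f. isF n f \<and> (\<forall>w. f w \<noteq> 0 \<longrightarrow> w \<in> IW G)}"

lemma IW_app: assumes "w \<in> IW G" shows "u @ w @ v \<in> IW G"
proof -
  from assms obtain a t c where "t \<in> G" "w = a @ t @ c" unfolding IW_def by blast
  then show ?thesis unfolding IW_def
    by (intro CollectI exI[of _ "u @ a"] exI[of _ t] exI[of _ "c @ v"]) simp
qed

lemma IW_appR: "w \<in> IW G \<Longrightarrow> w @ v \<in> IW G"
  using IW_app[of w G "[]" v] by simp

lemma IW_appL: "w \<in> IW G \<Longrightarrow> u @ w \<in> IW G"
  using IW_app[of w G u "[]"] by simp

lemma IW_gen: "t \<in> G \<Longrightarrow> t \<in> IW G"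
  unfolding IW_def by (intro CollectI exI[of _ "[]"] exI[of _ t]) simp

lemma isF_zero: "isF n (\<lambda>_. 0)"
  unfolding isF_def by simp

lemma isFree_zero: "isFree n J (\<lambda>_ _. 0)"
  unfolding isFree_def by simp

lemma isF_mono: "set a \<subseteq> {..<n} \<Longrightarrow> isF n (mono a)"
  by (simp add: mono_cmono isF_cmono)

lemma tideal_sub_FI:
  assumes G: "\<forall>g\<in>G. set g \<subseteq> {..<n}" and y: "y \<in> tideal n (mono ` G)"
  shows "y \<in> FI n G"
  using y
proof (induction y rule: tideal.induct)
  case (gen a)
  then obtain g where g: "g \<in> G" "a = mono g" by auto
  have "isF n (mono g)" using G g by (simp add: isF_mono)
  moreover have "\<forall>w. mono g w \<noteq> (0::'a) \<longrightarrow> w \<in> IW G"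
    using IW_gen[OF g(1)] by (simp add: mono_def)
  ultimately show ?case using g by (simp add: FI_def)
next
  case zero then show ?case by (simp add: FI_def isF_zero)
next
  case (add a b)
  have "\<forall>w. a w + b w \<noteq> 0 \<longrightarrow> w \<in> IW G"
  proof (intro allI impI)
    fix w assume "a w + b w \<noteq> 0"
    then have "a w \<noteq> 0 \<or> b w \<noteq> 0" by auto
    then show "w \<in> IW G" using add.IH unfolding FI_def by blast
  qed
  then show ?case using add.IH isF_add unfolding FI_def by blast
next
  case (lmul a f)
  have "\<forall>w. fmul f a w \<noteq> 0 \<longrightarrow> w \<in> IW G"
  proof (intro allI impI)
    fix w assume "fmul f a w \<noteq> 0"
    then obtain u v where "w = u @ v" "a v \<noteq> 0" using fmul_nz by blast
    then show "w \<in> IW G" using lmul IW_appL unfolding FI_def by blast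
  qed
  then show ?case using lmul isF_fmul unfolding FI_def by blast
next
  case (rmul a f)
  have "\<forall>w. fmul a f w \<noteq> 0 \<longrightarrow> w \<in> IW G"
  proof (intro allI impI)
    fix w assume "fmul a f w \<noteq> 0"
    then obtain u v where "w = u @ v" "a u \<noteq> 0" using fmul_nz by blast
    then show "w \<in> IW G" using rmul IW_appR unfolding FI_def by blast
  qed
  then show ?case using rmul isF_fmul unfolding FI_def by blast
qed

lemma mono_in_tideal:
  assumes "w \<in> IW G" "set w \<subseteq> {..<n}"
  shows "mono w \<in> tideal n (mono ` G)"
proof -
  obtain a t c where w: "t \<in> G" "w = a @ t @ c" using assms unfolding IW_def by blast
  have "mono t \<in> tideal n (mono ` G)" using w by (auto intro: tideal.gen)
  then have "fmul (mono a) (mono t) \<in> tideal n (mono ` G)"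
    by (rule tideal.lmul) (use w assms in \<open>auto intro: isF_mono\<close>)
  then have "fmul (fmul (mono a) (mono t)) (mono c) \<in> tideal n (mono ` G)"
    by (rule tideal.rmul) (use w assms in \<open>auto intro: isF_mono\<close>)
  then show ?thesis by (simp only: w append_assoc[symmetric] mono_app)
qed

lemma cmono_in_tideal:
  assumes "w \<in> IW G" "set w \<subseteq> {..<n}"
  shows "cmono c w \<in> tideal n (mono ` G)"
proof -
  have "fmul (cmono c []) (mono w) \<in> tideal n (mono ` G)"
    using tideal.lmul[OF mono_in_tideal[OF assms] isF_cmono[of "[]" n c]] by simp
  then show ?thesis by (simp only: cmono_eq[of c w])
qed

lemma tideal_char:
  assumes G: "\<forall>g\<in>G. set g \<subseteq> {..<n}"
  shows "tideal n (mono ` G) = FI n G"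
proof
  show "tideal n (mono ` G) \<subseteq> FI n G" using tideal_sub_FI[OF G] by blast
next
  show "FI n G \<subseteq> tideal n (mono ` G)"
  proof
    fix f assume f: "f \<in> FI n G"
    then have fin: "finite {w. f w \<noteq> 0}" unfolding FI_def isF_def by auto
    have "(\<lambda>u. \<Sum>w\<in>{w. f w \<noteq> 0}. cmono (f w) w u) \<in> tideal n (mono ` G)"
      using f fin by (intro tideal_sum cmono_in_tideal) (auto simp: FI_def isF_def)
    then show "f \<in> tideal n (mono ` G)" using decomp_F[OF fin, of f] by simp
  qed
qed

definition VU :: "nat \<Rightarrow> nat set \<Rightarrow> (nat \<times> nat list) set \<Rightarrow> (nat \<Rightarrow> nat list \<Rightarrow> 'k::field) set" where
  "VU n J U = {x. isFree n J x \<and> (\<forall>j w. x j w \<noteq> 0 \<longrightarrow> (j, w) \<in> U)}"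

definition vecs :: "(nat \<times> nat list) set \<Rightarrow> (nat \<Rightarrow> nat list \<Rightarrow> 'k::field) set" where
  "vecs S = (\<lambda>p. vec (fst p) (snd p)) ` S"

definition Cl :: "nat \<Rightarrow> nat set \<Rightarrow> nat list set \<Rightarrow> (nat \<times> nat list) set \<Rightarrow> (nat \<times> nat list) set" where
  "Cl n J G S = {(i, y). i \<in> J \<and> set y \<subseteq> {..<n} \<and> (y \<in> IW G \<or> (\<exists>u v. (i, u) \<in> S \<and> y = u @ v))}"

definition MinU :: "nat list set \<Rightarrow> (nat \<times> nat list) set \<Rightarrow> (nat \<times> nat list) set" where
  "MinU G U = {p \<in> U. snd p \<notin> IW G \<and> (\<forall>u v. snd p = u @ v \<longrightarrow> v \<noteq> [] \<longrightarrow> (fst p, u) \<notin> U)}"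

lemma Cl_up:
  assumes "(i, u) \<in> Cl n J G S" "set v \<subseteq> {..<n}"
  shows "(i, u @ v) \<in> Cl n J G S"
proof -
  have "i \<in> J" "set u \<subseteq> {..<n}" using assms(1) unfolding Cl_def by auto
  moreover have "u @ v \<in> IW G \<or> (\<exists>u' v'. (i, u') \<in> S \<and> u @ v = u' @ v')"
    using assms(1) unfolding Cl_def by (auto intro: IW_appR)
  ultimately show ?thesis using assms(2) unfolding Cl_def by auto
qed

lemma Cl_sub:
  assumes "S' \<subseteq> Cl n J G S" shows "Cl n J G S' \<subseteq> Cl n J G S"
proof
  fix p assume p: "p \<in> Cl n J G S'"
  obtain i y where py: "p = (i, y)" by (cases p)
  have iy: "i \<in> J" "set y \<subseteq> {..<n}" using p py unfolding Cl_def by auto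
  show "p \<in> Cl n J G S"
  proof (cases "y \<in> IW G")
    case True then show ?thesis using iy py unfolding Cl_def by auto
  next
    case False
    then obtain u v where "(i, u) \<in> S'" "y = u @ v" using p py unfolding Cl_def by auto
    then show ?thesis using Cl_up[of i u n J G S v] assms iy py by auto
  qed
qed

lemma Cl_incl:
  assumes "S \<subseteq> {(j, w). j \<in> J \<and> set w \<subseteq> {..<n}}"
  shows "S \<subseteq> Cl n J G S"
  using assms unfolding Cl_def by force

lemma vec_in_Ipart:
  assumes G: "\<forall>g\<in>G. set g \<subseteq> {..<n}" and "j \<in> J" "set w \<subseteq> {..<n}" "w \<in> IW G"
  shows "(vec j w :: nat \<Rightarrow> nat list \<Rightarrow> 'k::field) \<in> Ipart n J (tideal n (mono ` G))"
proof -
  have "isFree n J (vec j w :: nat \<Rightarrow> nat list \<Rightarrow> 'k)" using assms by (simp add: vec_cvec isFree_cvec)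
  moreover have "(vec j w i :: nat list \<Rightarrow> 'k) \<in> tideal n (mono ` G)" for i
  proof (cases "i = j")
    case True
    then have "(vec j w i :: nat list \<Rightarrow> 'k) = mono w" by (auto simp: vec_def mono_def)
    then show ?thesis using mono_in_tideal[OF assms(4,3)] by simp
  next
    case False
    then have "(vec j w i :: nat list \<Rightarrow> 'k) = (\<lambda>_. 0)" by (auto simp: vec_def)
    then show ?thesis by (simp add: tideal.zero)
  qed
  ultimately show ?thesis unfolding Ipart_def by auto
qed

lemma Ipart_sub_VU:
  assumes G: "\<forall>g\<in>G. set g \<subseteq> {..<n}"
  shows "Ipart n J (tideal n (mono ` G)) \<subseteq> VU n J (Cl n J G S)"
proof
  fix x assume x: "x \<in> Ipart n J (tideal n (mono ` G))"
  have "x j w \<noteq> 0 \<Longrightarrow> (j, w) \<in> Cl n J G S" for j w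
  proof -
    assume nz: "x j w \<noteq> 0"
    have "j \<in> J" "set w \<subseteq> {..<n}" using x nz unfolding Ipart_def isFree_def by auto
    moreover have "x j \<in> FI n G" using x tideal_char[OF G] unfolding Ipart_def by auto
    then have "w \<in> IW G" using nz unfolding FI_def by auto
    ultimately show ?thesis unfolding Cl_def by auto
  qed
  then show "x \<in> VU n J (Cl n J G S)" using x unfolding VU_def Ipart_def by auto
qed

lemma rsub_sub_VU:
  assumes G: "\<forall>g\<in>G. set g \<subseteq> {..<n}"
    and S: "S \<subseteq> {(j, w). j \<in> J \<and> set w \<subseteq> {..<n}}"
    and y: "y \<in> rsub n (vecs S \<union> Ipart n J (tideal n (mono ` G)))"
  shows "y \<in> VU n J (Cl n J G S)"
  using y
proof (induction y rule: rsub.induct)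
  case (gen x)
  then show ?case
  proof
    assume "x \<in> vecs S"
    then obtain j w where jw: "(j, w) \<in> S" "x = vec j w" unfolding vecs_def by auto
    then have "isFree n J x" using S by (auto simp: vec_cvec isFree_cvec)
    moreover have "(j, w) \<in> Cl n J G S" using Cl_incl[OF S] jw by auto
    ultimately show ?thesis using jw unfolding VU_def by (auto simp: vec_def)
  next
    assume "x \<in> Ipart n J (tideal n (mono ` G))"
    then show ?thesis using Ipart_sub_VU[OF G] by blast
  qed
next
  case zero then show ?case by (simp add: VU_def isFree_zero)
next
  case (add x y)
  have "\<forall>j w. x j w + y j w \<noteq> 0 \<longrightarrow> (j, w) \<in> Cl n J G S"
  proof (intro allI impI)
    fix j w assume "x j w + y j w \<noteq> 0"
    then have "x j w \<noteq> 0 \<or> y j w \<noteq> 0" by auto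
    then show "(j, w) \<in> Cl n J G S" using add.IH unfolding VU_def by blast
  qed
  then show ?case using add.IH isFree_add unfolding VU_def by blast
next
  case (rmul x f)
  have "\<forall>j w. ract x f j w \<noteq> 0 \<longrightarrow> (j, w) \<in> Cl n J G S"
  proof (intro allI impI)
    fix j w assume "ract x f j w \<noteq> 0"
    then obtain u v where uv: "w = u @ v" "x j u \<noteq> 0" "f v \<noteq> 0" using ract_nz by blast
    then have "(j, u) \<in> Cl n J G S" using rmul.IH unfolding VU_def by blast
    moreover have "set v \<subseteq> {..<n}" using rmul.hyps uv unfolding isF_def by auto
    ultimately show "(j, w) \<in> Cl n J G S" using Cl_up uv by blast
  qed
  then show ?case using rmul isFree_ract unfolding VU_def by blast
qed

lemma VU_sub_rsub:
  assumes G: "\<forall>g\<in>G. set g \<subseteq> {..<n}"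
    and x: "x \<in> VU n J (Cl n J G S)"
  shows "x \<in> rsub n (vecs S \<union> Ipart n J (tideal n (mono ` G)))"
proof -
  let ?R = "rsub n (vecs S \<union> Ipart n J (tideal n (mono ` G)))"
  have fin: "finite {(j, w). x j w \<noteq> 0}" using x unfolding VU_def isFree_def by auto
  have vin: "vec j w \<in> ?R" if jw: "(j, w) \<in> Cl n J G S" for j w
  proof -
    have jw': "j \<in> J" "set w \<subseteq> {..<n}" using jw unfolding Cl_def by auto
    show ?thesis
    proof (cases "w \<in> IW G")
      case True
      then show ?thesis using vec_in_Ipart[OF G jw'] by (auto intro: rsub.gen)
    next
      case False
      then obtain u v where uv: "(j, u) \<in> S" "w = u @ v" using jw unfolding Cl_def by auto
      have "vec j u \<in> ?R" using uv(1) by (force intro: rsub.gen simp: vecs_def)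
      moreover have "isF n (mono v)" using jw' uv by (auto intro: isF_mono)
      ultimately have "ract (vec j u) (mono v) \<in> ?R" by (rule rsub.rmul)
      then show ?thesis using uv by (simp add: vec_app)
    qed
  qed
  have R: "(\<lambda>i u. \<Sum>p\<in>{(j, w). x j w \<noteq> 0}. cvec (x (fst p) (snd p)) (fst p) (snd p) i u) \<in> ?R"
  proof (rule rsub_sum[OF fin])
    fix p assume p: "p \<in> {(j, w). x j w \<noteq> 0}"
    then have "p \<in> Cl n J G S" using x unfolding VU_def by auto
    then have "vec (fst p) (snd p) \<in> ?R" using vin by (cases p) auto
    then have "ract (vec (fst p) (snd p)) (cmono (x (fst p) (snd p)) []) \<in> ?R"
      by (rule rsub.rmul) (simp add: isF_cmono)
    then show "cvec (x (fst p) (snd p)) (fst p) (snd p) \<in> ?R" by (simp only: cvec_eq)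
  qed
  show ?thesis by (subst decomp_M[OF fin order_refl]) (rule R)
qed

lemma rsub_char:
  assumes G: "\<forall>g\<in>G. set g \<subseteq> {..<n}"
    and S: "S \<subseteq> {(j, w). j \<in> J \<and> set w \<subseteq> {..<n}}"
  shows "rsub n (vecs S \<union> Ipart n J (tideal n (mono ` G))) = VU n J (Cl n J G S)"
  using rsub_sub_VU[OF G S] VU_sub_rsub[OF G] by blast



lemma Min_cover:
  assumes "(j, w) \<in> Cl n J G S"
  shows "w \<in> IW G \<or> (\<exists>u v. (j, u) \<in> MinU G (Cl n J G S) \<and> w = u @ v)"
  using assms
proof (induction w rule: length_induct)
  case (1 w)
  let ?U = "Cl n J G S"
  show ?case
  proof (cases "w \<in> IW G")
    case True then show ?thesis by blast
  next
    case notIW: False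
    show ?thesis
    proof (cases "(j, w) \<in> MinU G ?U")
      case True then show ?thesis by (intro disjI2 exI[of _ w] exI[of _ "[]"]) simp
    next
      case False
      then obtain u v where uv: "w = u @ v" "v \<noteq> []" "(j, u) \<in> ?U"
        using notIW "1.prems" unfolding MinU_def by auto
      have "length u < length w" using uv by simp
      then have "u \<in> IW G \<or> (\<exists>u' v'. (j, u') \<in> MinU G ?U \<and> u = u' @ v')"
        using "1.IH" uv(3) by blast
      then show ?thesis
      proof
        assume "u \<in> IW G" then show ?thesis using uv IW_appR by blast
      next
        assume "\<exists>u' v'. (j, u') \<in> MinU G ?U \<and> u = u' @ v'"
        then obtain u' v' where "(j, u') \<in> MinU G ?U" "u = u' @ v'" by blast
        then show ?thesis using uv by (intro disjI2 exI[of _ u'] exI[of _ "v' @ v"]) simp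
      qed
    qed
  qed
qed

lemma MinU_sub: "MinU G U \<subseteq> U"
  unfolding MinU_def by auto

lemma Cl_Min: "Cl n J G (MinU G (Cl n J G S)) = Cl n J G S"
proof
  show "Cl n J G (MinU G (Cl n J G S)) \<subseteq> Cl n J G S" by (rule Cl_sub[OF MinU_sub])
next
  show "Cl n J G S \<subseteq> Cl n J G (MinU G (Cl n J G S))"
  proof
    fix p assume p: "p \<in> Cl n J G S"
    obtain i y where py: "p = (i, y)" by (cases p)
    have "i \<in> J" "set y \<subseteq> {..<n}" using p py unfolding Cl_def by auto
    then show "p \<in> Cl n J G (MinU G (Cl n J G S))"
      using Min_cover[of i y n J G S] p py unfolding Cl_def[of n J G "MinU G (Cl n J G S)"] by auto
  qed
qed

lemma Cl_range: "Cl n J G S \<subseteq> {(j, w). j \<in> J \<and> set w \<subseteq> {..<n}}"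
  unfolding Cl_def by auto

lemma vec_inj: "(vec j w :: nat \<Rightarrow> nat list \<Rightarrow> 'k::field) = vec j' w' \<Longrightarrow> j = j' \<and> w = w'"
proof -
  assume "(vec j w :: nat \<Rightarrow> nat list \<Rightarrow> 'k::field) = vec j' w'"
  then have "(vec j w j w :: 'k) = vec j' w' j w" by simp
  then show ?thesis by (auto simp: vec_def split: if_splits)
qed

lemma homog_vec: "homog D (D j + int (length w)) (vec j w)"
  unfolding homog_def vec_def by auto

lemma minbasis_Min:
  assumes G: "\<forall>g\<in>G. set g \<subseteq> {..<n}"
    and S: "S \<subseteq> {(j, w). j \<in> J \<and> set w \<subseteq> {..<n}}"
  shows "minbasis n J D (tideal n (mono ` G)) (VU n J (Cl n J G S))
           (vecs (MinU G (Cl n J G S)) :: (nat \<Rightarrow> nat list \<Rightarrow> 'k::field) set)"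
proof -
  let ?U = "Cl n J G S" let ?M = "MinU G ?U"
  have MR: "?M \<subseteq> {(j, w). j \<in> J \<and> set w \<subseteq> {..<n}}" using MinU_sub Cl_range by blast
  have "isFree n J (vec j w :: nat \<Rightarrow> nat list \<Rightarrow> 'k)" if "(j, w) \<in> ?M" for j w
  proof -
    from that MR have "j \<in> J" "set w \<subseteq> {..<n}" by auto
    then show ?thesis by (simp add: vec_cvec isFree_cvec)
  qed
  then have c1: "(vecs ?M :: (nat \<Rightarrow> nat list \<Rightarrow> 'k) set) \<subseteq> {x. isFree n J x}"
    unfolding vecs_def by auto
  have c2: "\<forall>b\<in>(vecs ?M :: (nat \<Rightarrow> nat list \<Rightarrow> 'k) set). \<exists>e. homog D e b"
    unfolding vecs_def using homog_vec by blast
  have c3: "VU n J ?U = rsub n ((vecs ?M :: (nat \<Rightarrow> nat list \<Rightarrow> 'k) set) \<union> Ipart n J (tideal n (mono ` G)))"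
  proof -
    have "rsub n ((vecs ?M :: (nat \<Rightarrow> nat list \<Rightarrow> 'k) set) \<union> Ipart n J (tideal n (mono ` G))) = VU n J (Cl n J G ?M)"
      by (rule rsub_char[OF G MR])
    then show ?thesis by (simp add: Cl_Min)
  qed
  have c4: "b \<notin> rsub n ((vecs ?M - {b}) \<union> Ipart n J (tideal n (mono ` G)))"
    if b: "b \<in> (vecs ?M :: (nat \<Rightarrow> nat list \<Rightarrow> 'k) set)" for b
  proof
    obtain j w where jw: "(j, w) \<in> ?M" "b = vec j w" using b unfolding vecs_def by auto
    have eq: "(vecs ?M - {b} :: (nat \<Rightarrow> nat list \<Rightarrow> 'k) set) = vecs (?M - {(j, w)})"
      using jw vec_inj unfolding vecs_def by fastforce
    have MR': "?M - {(j, w)} \<subseteq> {(j, w). j \<in> J \<and> set w \<subseteq> {..<n}}" using MR by blast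
    assume "b \<in> rsub n ((vecs ?M - {b}) \<union> Ipart n J (tideal n (mono ` G)))"
    moreover have "rsub n ((vecs (?M - {(j, w)}) :: (nat \<Rightarrow> nat list \<Rightarrow> 'k) set) \<union> Ipart n J (tideal n (mono ` G))) = VU n J (Cl n J G (?M - {(j, w)}))"
      by (rule rsub_char[OF G MR'])
    ultimately have "b \<in> VU n J (Cl n J G (?M - {(j, w)}))" using eq by simp
    moreover have "b j w \<noteq> 0" using jw by (simp add: vec_def)
    ultimately have "(j, w) \<in> Cl n J G (?M - {(j, w)})" unfolding VU_def by blast
    then have "w \<in> IW G \<or> (\<exists>u v. (j, u) \<in> ?M - {(j, w)} \<and> w = u @ v)" unfolding Cl_def by auto
    then show False
    proof
      assume "w \<in> IW G" then show False using jw unfolding MinU_def by auto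
    next
      assume "\<exists>u v. (j, u) \<in> ?M - {(j, w)} \<and> w = u @ v"
      then obtain u v where uv: "(j, u) \<in> ?M" "u \<noteq> w" "w = u @ v" by auto
      then have "v \<noteq> []" by auto
      then show False using uv jw MinU_sub unfolding MinU_def by fastforce
    qed
  qed
  show ?thesis unfolding minbasis_def using c1 c2 c3 c4 by blast
qed

definition MinO :: "nat list set \<Rightarrow> nat list set" where
  "MinO G = {t \<in> IW G. \<forall>a u c. t = a @ u @ c \<longrightarrow> (a \<noteq> [] \<or> c \<noteq> []) \<longrightarrow> u \<notin> IW G}"

lemma MinO_sub: "MinO G \<subseteq> G"
proof
  fix t assume t: "t \<in> MinO G"
  then obtain a g c where g: "g \<in> G" "t = a @ g @ c" unfolding MinO_def IW_def by auto
  have "g \<in> IW G" using IW_gen[OF g(1)] .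
  then have "a = [] \<and> c = []" using t g unfolding MinO_def by blast
  then show "t \<in> G" using g by simp
qed

lemma MinO_IW: "MinO G \<subseteq> IW G"
  unfolding MinO_def by auto

lemma MinO_cover: "w \<in> IW G \<Longrightarrow> \<exists>a t c. t \<in> MinO G \<and> w = a @ t @ c"
proof (induction w rule: length_induct)
  case (1 w)
  show ?case
  proof (cases "w \<in> MinO G")
    case True then show ?thesis by (intro exI[of _ "[]"] exI[of _ w]) simp
  next
    case False
    then obtain a u c where auc: "w = a @ u @ c" "a \<noteq> [] \<or> c \<noteq> []" "u \<in> IW G"
      using "1.prems" unfolding MinO_def by auto
    then have "length u < length w" by auto
    then obtain a' t c' where "t \<in> MinO G" "u = a' @ t @ c'" using "1.IH" auc(3) by blast
    then show ?thesis using auc by (intro exI[of _ "a @ a'"] exI[of _ t] exI[of _ "c' @ c"]) simp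
  qed
qed

lemma IW_MinO: "IW (MinO G) = IW G"
proof
  show "IW (MinO G) \<subseteq> IW G" using MinO_sub unfolding IW_def by blast
next
  show "IW G \<subseteq> IW (MinO G)"
  proof
    fix w assume "w \<in> IW G"
    then obtain a t c where "t \<in> MinO G" "w = a @ t @ c" using MinO_cover by blast
    then show "w \<in> IW (MinO G)" unfolding IW_def by blast
  qed
qed

lemma mono_inj: "(mono w :: nat list \<Rightarrow> 'k::field) = mono w' \<Longrightarrow> w = w'"
proof -
  assume "(mono w :: nat list \<Rightarrow> 'k::field) = mono w'"
  then have "(mono w w :: 'k) = mono w' w" by simp
  then show ?thesis by (auto simp: mono_def split: if_splits)
qed

lemma homogF_mono: "homogF (int (length w)) (mono w)"
  unfolding homogF_def mono_def by auto

lemma minbasis_MinO: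
  assumes G: "\<forall>g\<in>G. set g \<subseteq> {..<n}"
  shows "minbasis_ideal n (tideal n (mono ` G)) (mono ` MinO G :: (nat list \<Rightarrow> 'k::field) set)"
proof -
  have G': "\<forall>g\<in>MinO G. set g \<subseteq> {..<n}" using G MinO_sub by blast
  have c1: "(mono ` MinO G :: (nat list \<Rightarrow> 'k) set) \<subseteq> {f. isF n f}"
    using G' by (auto intro: isF_mono)
  have c2: "\<forall>b\<in>(mono ` MinO G :: (nat list \<Rightarrow> 'k) set). \<exists>e. homogF e b"
    using homogF_mono by blast
  have e1: "(tideal n (mono ` G) :: (nat list \<Rightarrow> 'k) set) = FI n G" by (rule tideal_char[OF G])
  have e2: "(tideal n (mono ` MinO G) :: (nat list \<Rightarrow> 'k) set) = FI n (MinO G)" by (rule tideal_char[OF G'])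
  have c3: "tideal n (mono ` G) = (tideal n (mono ` MinO G) :: (nat list \<Rightarrow> 'k) set)"
    unfolding e1 e2 FI_def IW_MinO ..
  have c4: "b \<notin> tideal n (mono ` MinO G - {b})"
    if b: "b \<in> (mono ` MinO G :: (nat list \<Rightarrow> 'k) set)" for b
  proof
    obtain t where t: "t \<in> MinO G" "b = mono t" using b by auto
    have eq: "(mono ` MinO G - {b} :: (nat list \<Rightarrow> 'k) set) = mono ` (MinO G - {t})"
      using t mono_inj by fastforce
    have G'': "\<forall>g\<in>MinO G - {t}. set g \<subseteq> {..<n}" using G' by blast
    assume "b \<in> tideal n (mono ` MinO G - {b})"
    moreover have "(tideal n (mono ` (MinO G - {t})) :: (nat list \<Rightarrow> 'k) set) = FI n (MinO G - {t})"
      by (rule tideal_char[OF G''])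
    ultimately have "b \<in> FI n (MinO G - {t})" using eq by simp
    moreover have "b t \<noteq> 0" using t by (simp add: mono_def)
    ultimately have "t \<in> IW (MinO G - {t})" unfolding FI_def by blast
    then obtain a t' c where tc: "t' \<in> MinO G" "t' \<noteq> t" "t = a @ t' @ c" unfolding IW_def by blast
    then have "a \<noteq> [] \<or> c \<noteq> []" by auto
    then have "t' \<notin> IW G" using t tc unfolding MinO_def by blast
    then show False using tc MinO_IW by blast
  qed
  show ?thesis unfolding minbasis_ideal_def using c1 c2 c3 c4 by blast
qed



definition compF :: "int \<Rightarrow> (nat list \<Rightarrow> 'k::field) \<Rightarrow> nat list \<Rightarrow> 'k" where
  "compF e f = (\<lambda>w. if int (length w) = e then f w else 0)"

definition compM :: "(nat \<Rightarrow> int) \<Rightarrow> int \<Rightarrow> (nat \<Rightarrow> nat list \<Rightarrow> 'k::field) \<Rightarrow> nat \<Rightarrow> nat list \<Rightarrow> 'k" where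
  "compM D e x = (\<lambda>i w. if D i + int (length w) = e then x i w else 0)"

lemma comp_ract:
  fixes x :: "nat \<Rightarrow> nat list \<Rightarrow> 'k::field"
  assumes E: "finite E" "\<forall>i u. x i u \<noteq> 0 \<longrightarrow> D i + int (length u) \<in> E"
  shows "compM D e (ract x f) = (\<lambda>i w. \<Sum>e'\<in>E. ract (compM D e' x) (compF (e - e') f) i w)"
proof (intro ext)
  fix i w
  define T where "T m = (if D i + int (length w) = e then x i (take m w) * f (drop m w) else 0)" for m
  have step: "ract (compM D e' x) (compF (e - e') f) i w
      = (\<Sum>m\<in>{0..length w}. if e' = D i + int m then T m else 0)" for e'
    unfolding ract_def compM_def compF_def T_def
    by (intro sum.cong refl) (auto simp: min_def of_nat_diff)
  have "(\<Sum>e'\<in>E. ract (compM D e' x) (compF (e - e') f) i w)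
      = (\<Sum>e'\<in>E. \<Sum>m\<in>{0..length w}. if e' = D i + int m then T m else 0)"
    by (simp add: step)
  also have "\<dots> = (\<Sum>m\<in>{0..length w}. \<Sum>e'\<in>E. if e' = D i + int m then T m else 0)"
    by (rule sum.swap)
  also have "\<dots> = (\<Sum>m\<in>{0..length w}. if D i + int m \<in> E then T m else 0)"
    using E(1) by simp
  also have "\<dots> = (\<Sum>m\<in>{0..length w}. T m)"
  proof (intro sum.cong refl)
    fix m assume m: "m \<in> {0..length w}"
    show "(if D i + int m \<in> E then T m else 0) = T m"
    proof (cases "D i + int m \<in> E")
      case False
      then have "x i (take m w) = 0" using E(2) m by (metis atLeastAtMost_iff length_take min.absorb2)
      then show ?thesis by (simp add: T_def)
    qed simp
  qed
  also have "\<dots> = compM D e (ract x f) i w"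
    unfolding T_def compM_def ract_def by (cases "D i + int (length w) = e") simp_all
  finally show "compM D e (ract x f) i w = (\<Sum>e'\<in>E. ract (compM D e' x) (compF (e - e') f) i w)" by simp
qed

lemma comp_fmul_R:
  fixes a :: "nat list \<Rightarrow> 'k::field"
  assumes E: "finite E" "\<forall>v. a v \<noteq> 0 \<longrightarrow> int (length v) \<in> E"
  shows "compF e (fmul f a) = (\<lambda>w. \<Sum>e'\<in>E. fmul (compF (e - e') f) (compF e' a) w)"
proof (intro ext)
  fix w
  define T where "T m = (if int (length w) = e then f (take m w) * a (drop m w) else 0)" for m
  have step: "fmul (compF (e - e') f) (compF e' a) w
      = (\<Sum>m\<in>{0..length w}. if e' = int (length w - m) then T m else 0)" for e'
    unfolding fmul_def compF_def T_def
    by (intro sum.cong refl) (auto simp: min_def of_nat_diff)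
  have "(\<Sum>e'\<in>E. fmul (compF (e - e') f) (compF e' a) w)
      = (\<Sum>e'\<in>E. \<Sum>m\<in>{0..length w}. if e' = int (length w - m) then T m else 0)"
    by (simp add: step)
  also have "\<dots> = (\<Sum>m\<in>{0..length w}. \<Sum>e'\<in>E. if e' = int (length w - m) then T m else 0)"
    by (rule sum.swap)
  also have "\<dots> = (\<Sum>m\<in>{0..length w}. if int (length w - m) \<in> E then T m else 0)"
    using E(1) by simp
  also have "\<dots> = (\<Sum>m\<in>{0..length w}. T m)"
  proof (intro sum.cong refl)
    fix m assume m: "m \<in> {0..length w}"
    show "(if int (length w - m) \<in> E then T m else 0) = T m"
    proof (cases "int (length w - m) \<in> E")
      case False
      then have "a (drop m w) = 0" using E(2) by (metis length_drop)
      then show ?thesis by (simp add: T_def)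
    qed simp
  qed
  also have "\<dots> = compF e (fmul f a) w"
    unfolding T_def compF_def fmul_def by (cases "int (length w) = e") simp_all
  finally show "compF e (fmul f a) w = (\<Sum>e'\<in>E. fmul (compF (e - e') f) (compF e' a) w)" by simp
qed

lemma comp_fmul_L:
  fixes a :: "nat list \<Rightarrow> 'k::field"
  assumes E: "finite E" "\<forall>v. a v \<noteq> 0 \<longrightarrow> int (length v) \<in> E"
  shows "compF e (fmul a f) = (\<lambda>w. \<Sum>e'\<in>E. fmul (compF e' a) (compF (e - e') f) w)"
proof (intro ext)
  fix w
  define T where "T m = (if int (length w) = e then a (take m w) * f (drop m w) else 0)" for m
  have step: "fmul (compF e' a) (compF (e - e') f) w
      = (\<Sum>m\<in>{0..length w}. if e' = int m then T m else 0)" for e'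
    unfolding fmul_def compF_def T_def
    by (intro sum.cong refl) (auto simp: min_def of_nat_diff)
  have "(\<Sum>e'\<in>E. fmul (compF e' a) (compF (e - e') f) w)
      = (\<Sum>e'\<in>E. \<Sum>m\<in>{0..length w}. if e' = int m then T m else 0)"
    by (simp add: step)
  also have "\<dots> = (\<Sum>m\<in>{0..length w}. \<Sum>e'\<in>E. if e' = int m then T m else 0)"
    by (rule sum.swap)
  also have "\<dots> = (\<Sum>m\<in>{0..length w}. if int m \<in> E then T m else 0)"
    using E(1) by simp
  also have "\<dots> = (\<Sum>m\<in>{0..length w}. T m)"
  proof (intro sum.cong refl)
    fix m assume m: "m \<in> {0..length w}"
    show "(if int m \<in> E then T m else 0) = T m"
    proof (cases "int m \<in> E")
      case False
      then have "a (take m w) = 0" using E(2) m by (metis atLeastAtMost_iff length_take min.absorb2)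
      then show ?thesis by (simp add: T_def)
    qed simp
  qed
  also have "\<dots> = compF e (fmul a f) w"
    unfolding T_def compF_def fmul_def by (cases "int (length w) = e") simp_all
  finally show "compF e (fmul a f) w = (\<Sum>e'\<in>E. fmul (compF e' a) (compF (e - e') f) w)" by simp
qed

lemma homog_comp:
  assumes "homog D e0 t"
  shows "compM D e t = (if e = e0 then t else (\<lambda>_ _. 0))"
  using assms unfolding homog_def compM_def by (auto simp: fun_eq_iff)

lemma homogF_comp:
  assumes "homogF e0 t"
  shows "compF e t = (if e = e0 then t else (\<lambda>_. 0))"
  using assms unfolding homogF_def compF_def by (auto simp: fun_eq_iff)

lemma isF_sub: assumes "isF n f" "\<And>w. g w \<noteq> 0 \<Longrightarrow> f w \<noteq> 0" shows "isF n g"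
proof -
  have "{w. g w \<noteq> 0} \<subseteq> {w. f w \<noteq> 0}" using assms(2) by blast
  then show ?thesis using assms unfolding isF_def by (meson finite_subset)
qed

lemma isFree_sub: assumes "isFree n J f" "\<And>i w. g i w \<noteq> 0 \<Longrightarrow> f i w \<noteq> 0" shows "isFree n J g"
proof -
  have "{(i, w). g i w \<noteq> 0} \<subseteq> {(i, w). f i w \<noteq> 0}" using assms(2) by blast
  then show ?thesis using assms unfolding isFree_def by (meson finite_subset)
qed

lemma isF_compF: "isF n f \<Longrightarrow> isF n (compF e f)"
  by (erule isF_sub) (auto simp: compF_def split: if_splits)

lemma isFree_compM: "isFree n J f \<Longrightarrow> isFree n J (compM D e f)"
  by (erule isFree_sub) (auto simp: compM_def split: if_splits)

lemma compF_neg: "e < 0 \<Longrightarrow> compF e f = (\<lambda>_. 0)"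
  unfolding compF_def by auto

lemma ract_zero: "ract x (\<lambda>_. 0) = (\<lambda>_ _. 0)"
  unfolding ract_def by (auto simp: fun_eq_iff)

lemma fmul_zero_L: "fmul (\<lambda>_. 0) f = (\<lambda>_. 0)"
  unfolding fmul_def by (auto simp: fun_eq_iff)

lemma fmul_zero_R: "fmul f (\<lambda>_. 0) = (\<lambda>_. 0)"
  unfolding fmul_def by (auto simp: fun_eq_iff)

lemma finite_degs_M:
  assumes "isFree n J x"
  shows "finite ((\<lambda>(i, u). D i + int (length u)) ` {(i, u). x i u \<noteq> 0})"
  using assms unfolding isFree_def by auto

lemma finite_degs_F:
  assumes "isF n x"
  shows "finite ((\<lambda>u. int (length u)) ` {u. x u \<noteq> 0})"
  using assms unfolding isF_def by auto

lemma comp_rsub: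
  assumes T: "\<forall>t\<in>T. isFree n J t \<and> (\<exists>e. homog D e t)"
    and P: "\<forall>p\<in>P. isFree n J p \<and> (\<forall>e. compM D e p \<in> P)"
    and y: "y \<in> rsub n (T \<union> P)"
  shows "isFree n J y \<and> (\<forall>e. compM D e y \<in> rsub n ({t\<in>T. \<exists>e'\<le>e. homog D e' t} \<union> P))"
  using y
proof (induction y rule: rsub.induct)
  case (gen x)
  then show ?case
  proof
    assume x: "x \<in> T"
    then obtain e0 where e0: "homog D e0 x" using T by blast
    have "compM D e x \<in> rsub n ({t\<in>T. \<exists>e'\<le>e. homog D e' t} \<union> P)" for e
    proof (cases "e = e0")
      case True
      then have "x \<in> {t\<in>T. \<exists>e'\<le>e. homog D e' t}" using x e0 by auto
      then show ?thesis using homog_comp[OF e0, of e] True by (auto intro: rsub.gen)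
    next
      case False
      then show ?thesis using homog_comp[OF e0, of e] by (simp add: rsub.zero)
    qed
    then show ?thesis using x T by blast
  next
    assume "x \<in> P" then show ?thesis using P by (auto intro: rsub.gen)
  qed
next
  case zero
  have "compM D e (\<lambda>_ _. 0) = (\<lambda>_ _. (0::'a))" for e by (auto simp: compM_def fun_eq_iff)
  then show ?case by (simp add: isFree_zero rsub.zero)
next
  case (add x y)
  have "compM D e (\<lambda>i w. x i w + y i w) = (\<lambda>i w. compM D e x i w + compM D e y i w)" for e
    by (auto simp: compM_def fun_eq_iff)
  then show ?case using add.IH by (simp add: isFree_add rsub.add)
next
  case (rmul x f)
  let ?E = "(\<lambda>(i, u). D i + int (length u)) ` {(i, u). x i u \<noteq> 0}"
  have fE: "finite ?E" using finite_degs_M rmul.IH by blast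
  have inE: "\<forall>i u. x i u \<noteq> 0 \<longrightarrow> D i + int (length u) \<in> ?E" by auto
  have "compM D e (ract x f) \<in> rsub n ({t\<in>T. \<exists>e'\<le>e. homog D e' t} \<union> P)" for e
  proof -
    have "(\<lambda>i w. \<Sum>e'\<in>?E. ract (compM D e' x) (compF (e - e') f) i w) \<in> rsub n ({t\<in>T. \<exists>e'\<le>e. homog D e' t} \<union> P)"
    proof (rule rsub_sum[OF fE])
      fix e' assume "e' \<in> ?E"
      show "ract (compM D e' x) (compF (e - e') f) \<in> rsub n ({t\<in>T. \<exists>e'\<le>e. homog D e' t} \<union> P)"
      proof (cases "e' \<le> e")
        case True
        have "compM D e' x \<in> rsub n ({t\<in>T. \<exists>e''\<le>e'. homog D e'' t} \<union> P)" using rmul.IH by blast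
        moreover have "{t\<in>T. \<exists>e''\<le>e'. homog D e'' t} \<union> P \<subseteq> {t\<in>T. \<exists>e'\<le>e. homog D e' t} \<union> P"
          using True by (auto; meson order.trans)
        ultimately have "compM D e' x \<in> rsub n ({t\<in>T. \<exists>e'\<le>e. homog D e' t} \<union> P)" by (rule rsub_mono)
        then show ?thesis using rmul.hyps by (intro rsub.rmul isF_compF)
      next
        case False
        then show ?thesis by (simp add: compF_neg ract_zero rsub.zero)
      qed
    qed
    then show ?thesis using comp_ract[OF fE inE] by simp
  qed
  then show ?case using rmul isFree_ract by blast
qed

lemma comp_tideal:
  assumes T: "\<forall>t\<in>T. isF n t \<and> (\<exists>e. homogF e t)"
    and y: "y \<in> tideal n T"
  shows "isF n y \<and> (\<forall>e. compF e y \<in> tideal n {t\<in>T. \<exists>e'\<le>e. homogF e' t})"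
  using y
proof (induction y rule: tideal.induct)
  case (gen x)
  then obtain e0 where e0: "homogF e0 x" using T by blast
  have "compF e x \<in> tideal n {t\<in>T. \<exists>e'\<le>e. homogF e' t}" for e
  proof (cases "e = e0")
    case True
    then have "x \<in> {t\<in>T. \<exists>e'\<le>e. homogF e' t}" using gen e0 by auto
    then show ?thesis using homogF_comp[OF e0, of e] True by (auto intro: tideal.gen)
  next
    case False
    then show ?thesis using homogF_comp[OF e0, of e] by (simp add: tideal.zero)
  qed
  then show ?case using gen T by blast
next
  case zero
  have "compF e (\<lambda>_. 0) = (\<lambda>_. (0::'a))" for e by (auto simp: compF_def fun_eq_iff)
  then show ?case by (simp add: isF_zero tideal.zero)
next
  case (add x y)
  have "compF e (\<lambda>w. x w + y w) = (\<lambda>w. compF e x w + compF e y w)" for e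
    by (auto simp: compF_def fun_eq_iff)
  then show ?case using add.IH by (simp add: isF_add tideal.add)
next
  case (lmul a f)
  let ?E = "(\<lambda>u. int (length u)) ` {u. a u \<noteq> 0}"
  have fE: "finite ?E" using finite_degs_F lmul.IH by blast
  have inE: "\<forall>u. a u \<noteq> 0 \<longrightarrow> int (length u) \<in> ?E" by auto
  have "compF e (fmul f a) \<in> tideal n {t\<in>T. \<exists>e'\<le>e. homogF e' t}" for e
  proof -
    have "(\<lambda>w. \<Sum>e'\<in>?E. fmul (compF (e - e') f) (compF e' a) w) \<in> tideal n {t\<in>T. \<exists>e'\<le>e. homogF e' t}"
    proof (rule tideal_sum[OF fE])
      fix e' assume "e' \<in> ?E"
      show "fmul (compF (e - e') f) (compF e' a) \<in> tideal n {t\<in>T. \<exists>e'\<le>e. homogF e' t}"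
      proof (cases "e' \<le> e")
        case True
        have "compF e' a \<in> tideal n {t\<in>T. \<exists>e''\<le>e'. homogF e'' t}" using lmul.IH by blast
        moreover have "{t\<in>T. \<exists>e''\<le>e'. homogF e'' t} \<subseteq> {t\<in>T. \<exists>e'\<le>e. homogF e' t}"
          using True by (auto; meson order.trans)
        ultimately have "compF e' a \<in> tideal n {t\<in>T. \<exists>e'\<le>e. homogF e' t}" by (rule tideal_mono)
        then show ?thesis using lmul.hyps by (intro tideal.lmul isF_compF)
      next
        case False
        then show ?thesis by (simp add: compF_neg fmul_zero_L tideal.zero)
      qed
    qed
    then show ?thesis using comp_fmul_R[OF fE inE] by simp
  qed
  then show ?case using lmul isF_fmul by blast
next
  case (rmul a f)
  let ?E = "(\<lambda>u. int (length u)) ` {u. a u \<noteq> 0}"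
  have fE: "finite ?E" using finite_degs_F rmul.IH by blast
  have inE: "\<forall>u. a u \<noteq> 0 \<longrightarrow> int (length u) \<in> ?E" by auto
  have "compF e (fmul a f) \<in> tideal n {t\<in>T. \<exists>e'\<le>e. homogF e' t}" for e
  proof -
    have "(\<lambda>w. \<Sum>e'\<in>?E. fmul (compF e' a) (compF (e - e') f) w) \<in> tideal n {t\<in>T. \<exists>e'\<le>e. homogF e' t}"
    proof (rule tideal_sum[OF fE])
      fix e' assume "e' \<in> ?E"
      show "fmul (compF e' a) (compF (e - e') f) \<in> tideal n {t\<in>T. \<exists>e'\<le>e. homogF e' t}"
      proof (cases "e' \<le> e")
        case True
        have "compF e' a \<in> tideal n {t\<in>T. \<exists>e''\<le>e'. homogF e'' t}" using rmul.IH by blast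
        moreover have "{t\<in>T. \<exists>e''\<le>e'. homogF e'' t} \<subseteq> {t\<in>T. \<exists>e'\<le>e. homogF e' t}"
          using True by (auto; meson order.trans)
        ultimately have "compF e' a \<in> tideal n {t\<in>T. \<exists>e'\<le>e. homogF e' t}" by (rule tideal_mono)
        then show ?thesis using rmul.hyps by (intro tideal.rmul isF_compF)
      next
        case False
        then show ?thesis by (simp add: compF_neg fmul_zero_R tideal.zero)
      qed
    qed
    then show ?thesis using comp_fmul_L[OF fE inE] by simp
  qed
  then show ?case using rmul isF_fmul by blast
qed



lemma rsub_closed: "y \<in> rsub n T \<Longrightarrow> T \<subseteq> rsub n A \<Longrightarrow> y \<in> rsub n A"
  by (induction y rule: rsub.induct) (auto intro: rsub.intros)

lemma tideal_closed: "y \<in> tideal n T \<Longrightarrow> T \<subseteq> tideal n A \<Longrightarrow> y \<in> tideal n A"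
  by (induction y rule: tideal.induct) (auto intro: tideal.intros)

lemma Ipart_comp:
  assumes G: "\<forall>g\<in>G. set g \<subseteq> {..<n}"
  shows "\<forall>p\<in>Ipart n J (tideal n (mono ` G) :: (nat list \<Rightarrow> 'k::field) set).
           isFree n J p \<and> (\<forall>e. compM D e p \<in> Ipart n J (tideal n (mono ` G)))"
proof (intro ballI conjI allI)
  have TI: "(tideal n (mono ` G) :: (nat list \<Rightarrow> 'k) set) = FI n G" by (rule tideal_char[OF G])
  fix p :: "nat \<Rightarrow> nat list \<Rightarrow> 'k" and e
  assume p: "p \<in> Ipart n J (tideal n (mono ` G))"
  then show "isFree n J p" unfolding Ipart_def by auto
  have "compM D e p j \<in> FI n G" for j
  proof -
    have "p j \<in> FI n G" using p TI unfolding Ipart_def by auto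
    moreover have "compM D e p j w \<noteq> 0 \<Longrightarrow> p j w \<noteq> 0" for w by (auto simp: compM_def split: if_splits)
    ultimately show ?thesis unfolding FI_def by (auto intro: isF_sub)
  qed
  then show "compM D e p \<in> Ipart n J (tideal n (mono ` G))"
    using p TI isFree_compM unfolding Ipart_def by auto
qed

lemma homog_unique: "homog D e x \<Longrightarrow> homog D e' x \<Longrightarrow> e \<noteq> e' \<Longrightarrow> x = (\<lambda>_ _. 0)"
  unfolding homog_def by (auto simp: fun_eq_iff)

lemma homogF_unique: "homogF e x \<Longrightarrow> homogF e' x \<Longrightarrow> e \<noteq> e' \<Longrightarrow> x = (\<lambda>_. 0)"
  unfolding homogF_def by (auto simp: fun_eq_iff)

lemma count_M:
  fixes B :: "(nat \<Rightarrow> nat list \<Rightarrow> 'k::field) set"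
  assumes G: "\<forall>g\<in>G. set g \<subseteq> {..<n}"
    and S: "S \<subseteq> {(j, w). j \<in> J \<and> set w \<subseteq> {..<n}}"
    and fin: "finite (MinU G (Cl n J G S))"
    and B: "minbasis n J D (tideal n (mono ` G)) (VU n J (Cl n J G S)) B"
  shows "finite {b\<in>B. homog D k b} \<and>
         card {b\<in>B. homog D k b} = card {p\<in>MinU G (Cl n J G S). D (fst p) + int (length (snd p)) = k}"
proof -
  define U where "U = Cl n J G S"
  define X where "X = (VU n J U :: (nat \<Rightarrow> nat list \<Rightarrow> 'k) set)"
  define P where "P = Ipart n J (tideal n (mono ` G) :: (nat list \<Rightarrow> 'k) set)"
  define Mk where "Mk = {p\<in>MinU G U. D (fst p) + int (length (snd p)) = k}"
  define Bk where "Bk = {b\<in>B. homog D k b}"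
  define pi where "pi y = (\<lambda>p. if p \<in> Mk then y (fst p) (snd p) else (0::'k))" for y :: "nat \<Rightarrow> nat list \<Rightarrow> 'k"
  have TI: "(tideal n (mono ` G) :: (nat list \<Rightarrow> 'k) set) = FI n G" by (rule tideal_char[OF G])
  have XB: "X = rsub n (B \<union> P)" using B unfolding minbasis_def X_def P_def U_def by auto
  have irr: "\<And>b. b \<in> B \<Longrightarrow> b \<notin> rsub n ((B - {b}) \<union> P)" using B unfolding minbasis_def P_def by auto
  have Bfree: "\<forall>t\<in>B. isFree n J t \<and> (\<exists>e. homog D e t)" using B unfolding minbasis_def by auto
  have Pc: "\<forall>p\<in>P. isFree n J p \<and> (\<forall>e. compM D e p \<in> P)" using Ipart_comp[OF G] unfolding P_def by blast
  have finMk: "finite Mk" using fin unfolding Mk_def U_def by auto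
  have MkMin: "Mk \<subseteq> MinU G U" unfolding Mk_def by auto
  have Xvan: "x j (take m w) = 0" if "x \<in> X" "(j, w) \<in> MinU G U" "m < length w" for x j w m
  proof -
    have "w = take m w @ drop m w" "drop m w \<noteq> []" using that by auto
    moreover have "\<forall>u v. w = u @ v \<longrightarrow> v \<noteq> [] \<longrightarrow> (j, u) \<notin> U"
      using that(2) unfolding MinU_def by auto
    ultimately have "(j, take m w) \<notin> U" by blast
    then show ?thesis using that(1) unfolding X_def VU_def by auto
  qed
  have pi_ract: "pi (ract x f) = scl (f []) (pi x)" if "x \<in> X" for x f
  proof
    fix p show "pi (ract x f) p = scl (f []) (pi x) p"
    proof (cases "p \<in> Mk")
      case True
      obtain j w where p: "p = (j, w)" by (cases p)
      have jw: "(j, w) \<in> MinU G U" using True MkMin p by auto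
      have "ract x f j w = x j w * f []"
        unfolding ract_def
        by (subst sum_single_m[where k="length w"]) (auto simp: Xvan[OF that jw])
      then show ?thesis using True p by (simp add: pi_def scl_def)
    qed (simp add: pi_def scl_def)
  qed
  have pi_P: "pi p = 0" if "p \<in> P" for p
  proof
    fix q show "pi p q = 0 q"
    proof (cases "q \<in> Mk")
      case True
      obtain j w where q: "q = (j, w)" by (cases q)
      have "w \<notin> IW G" using True MkMin q unfolding MinU_def by auto
      moreover have "p j \<in> FI n G" using that TI unfolding P_def Ipart_def by auto
      ultimately have "p j w = 0" unfolding FI_def by auto
      then show ?thesis using True q by (simp add: pi_def)
    qed (simp add: pi_def)
  qed
  have span_all: "pi y \<in> fvs.span (pi ` B)" if "y \<in> rsub n (B \<union> P)" for y
    using that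
  proof (induction y rule: rsub.induct)
    case (gen x)
    then show ?case
    proof
      assume "x \<in> B" then show ?thesis by (auto intro: fvs.span_base)
    next
      assume "x \<in> P" then show ?thesis using pi_P fvs.span_zero by metis
    qed
  next
    case zero
    have "pi (\<lambda>_ _. 0) = 0" by (auto simp: pi_def fun_eq_iff)
    then show ?case using fvs.span_zero by metis
  next
    case (add x y)
    have "pi (\<lambda>i w. x i w + y i w) = pi x + pi y" by (auto simp: pi_def fun_eq_iff)
    then show ?case using add.IH fvs.span_add by metis
  next
    case (rmul x f)
    have "x \<in> X" using rmul.hyps XB by simp
    then show ?case using pi_ract rmul.IH fvs.span_scale by metis
  qed
  have spanB: "fvs.span (pi ` B) \<subseteq> fvs.span (pi ` Bk)"
  proof -
    have "pi ` B \<subseteq> insert 0 (pi ` Bk)"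
    proof
      fix v assume "v \<in> pi ` B"
      then obtain b where b: "b \<in> B" "v = pi b" by auto
      show "v \<in> insert 0 (pi ` Bk)"
      proof (cases "homog D k b")
        case True then show ?thesis using b unfolding Bk_def by auto
      next
        case False
        obtain e where e: "homog D e b" using Bfree b by auto
        have "pi b = 0"
        proof
          fix q show "pi b q = 0 q"
            using e False unfolding pi_def Mk_def homog_def by (cases q) auto
        qed
        then show ?thesis using b by simp
      qed
    qed
    then have "fvs.span (pi ` B) \<subseteq> fvs.span (insert 0 (pi ` Bk))" by (rule fvs.span_mono)
    then show ?thesis by (simp add: fvs.span_insert_0)
  qed
  have sp: "unitv p \<in> fvs.span (pi ` Bk)" if p: "p \<in> Mk" for p
  proof -
    obtain j w where jw: "p = (j, w)" by (cases p)
    have jwU: "(j, w) \<in> U" using p jw MkMin unfolding MinU_def by auto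
    then have "j \<in> J" "set w \<subseteq> {..<n}" unfolding U_def Cl_def by auto
    then have "isFree n J (vec j w :: nat \<Rightarrow> nat list \<Rightarrow> 'k)" by (simp add: vec_cvec isFree_cvec)
    then have "vec j w \<in> X" using jwU unfolding X_def VU_def by (auto simp: vec_def)
    then have "pi (vec j w) \<in> fvs.span (pi ` B)" using span_all XB by simp
    moreover have "pi (vec j w) = unitv p" using p jw by (auto simp: pi_def unitv_def vec_def fun_eq_iff)
    ultimately show ?thesis using spanB by auto
  qed
  have key: "y \<in> rsub n ((B - {b0}) \<union> P)"
    if b0: "b0 \<in> Bk" and y: "y \<in> X" "homog D k y" "\<forall>p\<in>Mk. y (fst p) (snd p) = 0" for b0 y
  proof -
    let ?Y = "rsub n ((B - {b0}) \<union> P)"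
    have b0nz: "b0 \<noteq> (\<lambda>_ _. 0)"
    proof
      assume "b0 = (\<lambda>_ _. 0)"
      then have "b0 \<in> rsub n ((B - {b0}) \<union> P)" by (simp add: rsub.zero)
      then show False using irr b0 unfolding Bk_def by blast
    qed
    have vecY: "vec j u \<in> ?Y" if ju: "(j, u) \<in> U" "D j + int (length u) < k" for j u
    proof -
      have "j \<in> J" "set u \<subseteq> {..<n}" using ju unfolding U_def Cl_def by auto
      then have "isFree n J (vec j u :: nat \<Rightarrow> nat list \<Rightarrow> 'k)" by (simp add: vec_cvec isFree_cvec)
      then have "vec j u \<in> X" using ju unfolding X_def VU_def by (auto simp: vec_def)
      then have "vec j u \<in> rsub n (B \<union> P)" using XB by simp
      then have m1: "compM D (D j + int (length u)) (vec j u) \<in> rsub n ({t\<in>B. \<exists>e'\<le>D j + int (length u). homog D e' t} \<union> P)"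
        using comp_rsub[OF Bfree Pc] by blast
      have m2: "compM D (D j + int (length u)) (vec j u :: nat \<Rightarrow> nat list \<Rightarrow> 'k) = vec j u"
        by (simp add: homog_comp[OF homog_vec])
      have nh: "\<not> homog D e' b0" if "e' \<le> D j + int (length u)" for e'
      proof
        assume "homog D e' b0"
        moreover have "homog D k b0" using b0 unfolding Bk_def by auto
        moreover have "e' \<noteq> k" using that ju(2) by auto
        ultimately have "b0 = (\<lambda>_ _. 0)" by (rule homog_unique)
        then show False using b0nz by blast
      qed
      have m3: "{t\<in>B. \<exists>e'\<le>D j + int (length u). homog D e' t} \<union> P \<subseteq> (B - {b0}) \<union> P"
        using nh by blast
      show ?thesis using rsub_mono[OF m1 m3] m2 by simp
    qed
    have fy: "finite {(j, w). y j w \<noteq> 0}" using y(1) unfolding X_def VU_def isFree_def by auto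
    have "(\<lambda>i u. \<Sum>p\<in>{(j, w). y j w \<noteq> 0}. cvec (y (fst p) (snd p)) (fst p) (snd p) i u) \<in> ?Y"
    proof (rule rsub_sum[OF fy])
      fix p assume p: "p \<in> {(j, w). y j w \<noteq> 0}"
      obtain j w where jw: "p = (j, w)" by (cases p)
      have nz: "y j w \<noteq> 0" using p jw by auto
      have inU: "(j, w) \<in> U" using nz y(1) unfolding X_def VU_def by auto
      have deg: "D j + int (length w) = k" using nz y(2) unfolding homog_def by auto
      have wn: "j \<in> J" "set w \<subseteq> {..<n}" using inU unfolding U_def Cl_def by auto
      have "vec j w \<in> ?Y"
      proof (cases "w \<in> IW G")
        case True
        then have "vec j w \<in> P" unfolding P_def using vec_in_Ipart[OF G wn True] by simp
        then show ?thesis by (auto intro: rsub.gen)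
      next
        case False
        then obtain u v where uv: "(j, u) \<in> MinU G U" "w = u @ v"
          using Min_cover[of j w n J G S] inU unfolding U_def by auto
        have "v \<noteq> []"
        proof
          assume "v = []"
          then have "(j, w) \<in> Mk" using uv deg unfolding Mk_def by auto
          then show False using y(3) nz by auto
        qed
        then have "D j + int (length u) < k" using deg uv by auto
        then have "vec j u \<in> ?Y" using vecY uv MinU_sub by blast
        moreover have "isF n (mono v)" using wn uv by (auto intro: isF_mono)
        ultimately have "ract (vec j u) (mono v) \<in> ?Y" by (rule rsub.rmul)
        then show ?thesis using uv by (simp add: vec_app)
      qed
      then have "ract (vec j w) (cmono (y j w) []) \<in> ?Y" by (rule rsub.rmul) (simp add: isF_cmono)
      then show "cvec (y (fst p) (snd p)) (fst p) (snd p) \<in> ?Y" using jw by (simp only: cvec_eq fst_conv snd_conv)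
    qed
    then show ?thesis by (subst decomp_M[OF fy order_refl])
  qed
  have ind: "pi b0 \<notin> fvs.span (pi ` (Bk - {b0}))" if b0: "b0 \<in> Bk" for b0
  proof
    assume "pi b0 \<in> fvs.span (pi ` (Bk - {b0}))"
    then obtain t r where tr: "finite t" "t \<subseteq> pi ` (Bk - {b0})" "pi b0 = (\<Sum>a\<in>t. scl (r a) a)"
      unfolding fvs.span_explicit by blast
    define h where "h = inv_into (Bk - {b0}) pi"
    have h: "h a \<in> Bk - {b0}" "pi (h a) = a" if "a \<in> t" for a
    proof -
      have a: "a \<in> pi ` (Bk - {b0})" using tr(2) that by blast
      show "h a \<in> Bk - {b0}" unfolding h_def by (rule inv_into_into[OF a])
      show "pi (h a) = a" unfolding h_def by (rule f_inv_into_f[OF a])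
    qed
    let ?Y = "rsub n ((B - {b0}) \<union> P)"
    define z where "z = (\<lambda>i u. \<Sum>a\<in>t. ract (h a) (cmono (r a) []) i u)"
    have zY: "z \<in> ?Y" unfolding z_def
    proof (rule rsub_sum[OF tr(1)])
      fix a assume "a \<in> t"
      then have "h a \<in> B - {b0}" using h unfolding Bk_def by auto
      then have "h a \<in> ?Y" by (auto intro: rsub.gen)
      then show "ract (h a) (cmono (r a) []) \<in> ?Y" by (rule rsub.rmul) (simp add: isF_cmono)
    qed
    have zval: "z i u = (\<Sum>a\<in>t. h a i u * r a)" for i u
      unfolding z_def by (simp add: ract_cmono_nil_right)
    define y where "y = (\<lambda>i u. b0 i u + ract z (cmono (-1) []) i u)"
    have yval: "y i u = b0 i u - z i u" for i u unfolding y_def by (simp add: ract_cmono_nil_right)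
    have b0B: "b0 \<in> B" "homog D k b0" using b0 unfolding Bk_def by auto
    have "y \<in> rsub n (B \<union> P)" unfolding y_def
    proof (rule rsub.add)
      show "b0 \<in> rsub n (B \<union> P)" using b0B by (auto intro: rsub.gen)
      have "z \<in> rsub n (B \<union> P)" using zY rsub_mono[of z n "(B - {b0}) \<union> P" "B \<union> P"] by blast
      then show "ract z (cmono (- 1) []) \<in> rsub n (B \<union> P)" by (rule rsub.rmul) (simp add: isF_cmono)
    qed
    then have yX: "y \<in> X" using XB by simp
    have yh: "homog D k y" unfolding homog_def
    proof (intro allI impI)
      fix i u assume "y i u \<noteq> 0"
      then have "b0 i u \<noteq> 0 \<or> z i u \<noteq> 0" by (auto simp: yval)
      then show "D i + int (length u) = k"
      proof
        assume "b0 i u \<noteq> 0" then show ?thesis using b0B unfolding homog_def by auto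
      next
        assume "z i u \<noteq> 0"
        then have "(\<Sum>a\<in>t. h a i u * r a) \<noteq> 0" by (simp add: zval)
        then obtain a where "a \<in> t" "h a i u * r a \<noteq> 0" using sum_nz by blast
        then have "a \<in> t" "h a i u \<noteq> 0" by auto
        then show ?thesis using h unfolding Bk_def homog_def by blast
      qed
    qed
    have yv: "\<forall>p\<in>Mk. y (fst p) (snd p) = 0"
    proof
      fix p assume p: "p \<in> Mk"
      have "pi b0 p = (\<Sum>a\<in>t. scl (r a) a) p" using tr(3) by simp
      also have "\<dots> = (\<Sum>a\<in>t. r a * a p)" using tr(1) by (simp add: sum_fun_apply scl_def)
      also have "\<dots> = (\<Sum>a\<in>t. h a (fst p) (snd p) * r a)"
      proof (intro sum.cong refl)
        fix a assume a: "a \<in> t"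
        have "a p = pi (h a) p" using h(2)[OF a] by simp
        then show "r a * a p = h a (fst p) (snd p) * r a" using p by (simp add: pi_def)
      qed
      finally have "b0 (fst p) (snd p) = z (fst p) (snd p)" using p by (simp add: pi_def zval)
      then show "y (fst p) (snd p) = 0" by (simp add: yval)
    qed
    have "y \<in> ?Y" using key[OF b0 yX yh yv] .
    then have "(\<lambda>i u. y i u + z i u) \<in> ?Y" using zY by (rule rsub.add)
    moreover have "(\<lambda>i u. y i u + z i u) = b0" by (auto simp: yval fun_eq_iff)
    ultimately show False using irr b0B by auto
  qed
  have "finite Bk \<and> card Bk = card Mk"
  proof (rule count_lemma[OF finMk])
    show "\<And>b p. b \<in> Bk \<Longrightarrow> p \<notin> Mk \<Longrightarrow> pi b p = 0" by (simp add: pi_def)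
  qed (use sp ind in auto)
  then show ?thesis unfolding Bk_def Mk_def U_def by simp
qed



lemma fmul_cmono_nil_left: "fmul (cmono c []) g w = c * g w"
  by (simp add: fmul_cmono_left)

lemma count_I:
  fixes B :: "(nat list \<Rightarrow> 'k::field) set"
  assumes G: "\<forall>g\<in>G. set g \<subseteq> {..<n}" and finG: "finite G"
    and B: "minbasis_ideal n (tideal n (mono ` G)) B"
  shows "finite {b\<in>B. homogF k b} \<and> card {b\<in>B. homogF k b} = card {t\<in>MinO G. int (length t) = k}"
proof -
  define I where "I = (tideal n (mono ` G) :: (nat list \<Rightarrow> 'k) set)"
  define Ok where "Ok = {t\<in>MinO G. int (length t) = k}"
  define Bk where "Bk = {b\<in>B. homogF k b}"
  define pi where "pi y = (\<lambda>w. if w \<in> Ok then y w else (0::'k))" for y :: "nat list \<Rightarrow> 'k"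
  have TI: "I = FI n G" unfolding I_def by (rule tideal_char[OF G])
  have IB: "I = tideal n B" using B unfolding minbasis_ideal_def I_def by auto
  have irr: "\<And>b. b \<in> B \<Longrightarrow> b \<notin> tideal n (B - {b})" using B unfolding minbasis_ideal_def by auto
  have Bh: "\<forall>t\<in>B. isF n t \<and> (\<exists>e. homogF e t)" using B unfolding minbasis_ideal_def by auto
  have finOk: "finite Ok" unfolding Ok_def using MinO_sub finG by (auto intro: finite_subset)
  have OkMin: "Ok \<subseteq> MinO G" unfolding Ok_def by auto
  have vanR: "a (drop m w) = 0" if "a \<in> I" "w \<in> MinO G" "0 < m" "m \<le> length w" for a w m
  proof -
    have "w = take m w @ drop m w @ []" "take m w \<noteq> []" using that by auto
    then have "drop m w \<notin> IW G" using that(2) unfolding MinO_def by blast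
    then show ?thesis using that(1) TI unfolding FI_def by auto
  qed
  have vanL: "a (take m w) = 0" if "a \<in> I" "w \<in> MinO G" "m < length w" for a w m
  proof -
    have "w = [] @ take m w @ drop m w" "drop m w \<noteq> []" using that by auto
    then have "take m w \<notin> IW G" using that(2) unfolding MinO_def by blast
    then show ?thesis using that(1) TI unfolding FI_def by auto
  qed
  have pi_lmul: "pi (fmul f a) = scl (f []) (pi a)" if "a \<in> I" for a f
  proof
    fix w show "pi (fmul f a) w = scl (f []) (pi a) w"
    proof (cases "w \<in> Ok")
      case True
      then have wM: "w \<in> MinO G" using OkMin by auto
      have "fmul f a w = f [] * a w"
        unfolding fmul_def
        by (subst sum_single_m[where k=0]) (auto simp: vanR[OF that wM])
      then show ?thesis using True by (simp add: pi_def scl_def)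
    qed (simp add: pi_def scl_def)
  qed
  have pi_rmul: "pi (fmul a f) = scl (f []) (pi a)" if "a \<in> I" for a f
  proof
    fix w show "pi (fmul a f) w = scl (f []) (pi a) w"
    proof (cases "w \<in> Ok")
      case True
      then have wM: "w \<in> MinO G" using OkMin by auto
      have "fmul a f w = a w * f []"
        unfolding fmul_def
        by (subst sum_single_m[where k="length w"]) (auto simp: vanL[OF that wM])
      then show ?thesis using True by (simp add: pi_def scl_def mult.commute)
    qed (simp add: pi_def scl_def)
  qed
  have span_all: "pi y \<in> fvs.span (pi ` B)" if "y \<in> tideal n B" for y
    using that
  proof (induction y rule: tideal.induct)
    case (gen x)
    then show ?case by (auto intro: fvs.span_base)
  next
    case zero
    have "pi (\<lambda>_. 0) = 0" by (auto simp: pi_def fun_eq_iff)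
    then show ?case using fvs.span_zero by metis
  next
    case (add x y)
    have "pi (\<lambda>w. x w + y w) = pi x + pi y" by (auto simp: pi_def fun_eq_iff)
    then show ?case using add.IH fvs.span_add by metis
  next
    case (lmul a f)
    have "a \<in> I" using lmul.hyps IB by simp
    then show ?case using pi_lmul lmul.IH fvs.span_scale by metis
  next
    case (rmul a f)
    have "a \<in> I" using rmul.hyps IB by simp
    then show ?case using pi_rmul rmul.IH fvs.span_scale by metis
  qed
  have spanB: "fvs.span (pi ` B) \<subseteq> fvs.span (pi ` Bk)"
  proof -
    have "pi ` B \<subseteq> insert 0 (pi ` Bk)"
    proof
      fix v assume "v \<in> pi ` B"
      then obtain b where b: "b \<in> B" "v = pi b" by auto
      show "v \<in> insert 0 (pi ` Bk)"
      proof (cases "homogF k b")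
        case True then show ?thesis using b unfolding Bk_def by auto
      next
        case False
        obtain e where e: "homogF e b" using Bh b by auto
        have "pi b = 0"
        proof
          fix q show "pi b q = 0 q"
            using e False unfolding pi_def Ok_def homogF_def by auto
        qed
        then show ?thesis using b by simp
      qed
    qed
    then have "fvs.span (pi ` B) \<subseteq> fvs.span (insert 0 (pi ` Bk))" by (rule fvs.span_mono)
    then show ?thesis by (simp add: fvs.span_insert_0)
  qed
  have sp: "unitv t \<in> fvs.span (pi ` Bk)" if t: "t \<in> Ok" for t
  proof -
    have tG: "t \<in> G" using t OkMin MinO_sub by blast
    have "t \<in> IW G" using tG by (rule IW_gen)
    then have "mono t \<in> I" unfolding I_def using mono_in_tideal G tG by blast
    then have "pi (mono t) \<in> fvs.span (pi ` B)" using span_all IB by simp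
    moreover have "pi (mono t) = unitv t" using t by (auto simp: pi_def unitv_def mono_def fun_eq_iff)
    ultimately show ?thesis using spanB by auto
  qed
  have key: "y \<in> tideal n (B - {b0})"
    if b0: "b0 \<in> Bk" and y: "y \<in> I" "homogF k y" "\<forall>w\<in>Ok. y w = 0" for b0 y
  proof -
    let ?Y = "tideal n (B - {b0})"
    have b0nz: "b0 \<noteq> (\<lambda>_. 0)"
    proof
      assume "b0 = (\<lambda>_. 0)"
      then have "b0 \<in> ?Y" by (simp add: tideal.zero)
      then show False using irr b0 unfolding Bk_def by blast
    qed
    have monoY: "mono t \<in> ?Y" if tt: "t \<in> IW G" "set t \<subseteq> {..<n}" "int (length t) < k" for t
    proof -
      have "mono t \<in> I" unfolding I_def using mono_in_tideal[OF tt(1,2)] .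
      then have "mono t \<in> tideal n B" using IB by simp
      then have m1: "compF (int (length t)) (mono t) \<in> tideal n {s\<in>B. \<exists>e'\<le>int (length t). homogF e' s}"
        using comp_tideal[OF Bh] by blast
      have m2: "compF (int (length t)) (mono t :: nat list \<Rightarrow> 'k) = mono t"
        by (simp add: homogF_comp[OF homogF_mono])
      have nh: "\<not> homogF e' b0" if "e' \<le> int (length t)" for e'
      proof
        assume "homogF e' b0"
        moreover have "homogF k b0" using b0 unfolding Bk_def by auto
        moreover have "e' \<noteq> k" using that tt(3) by auto
        ultimately have "b0 = (\<lambda>_. 0)" by (rule homogF_unique)
        then show False using b0nz by blast
      qed
      have m3: "{s\<in>B. \<exists>e'\<le>int (length t). homogF e' s} \<subseteq> B - {b0}" using nh by blast
      show ?thesis using tideal_mono[OF m1 m3] m2 by simp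
    qed
    have yF: "y \<in> FI n G" using y(1) TI by simp
    have fy: "finite {w. y w \<noteq> 0}" using yF unfolding FI_def isF_def by auto
    have "(\<lambda>u. \<Sum>w\<in>{w. y w \<noteq> 0}. cmono (y w) w u) \<in> ?Y"
    proof (rule tideal_sum[OF fy])
      fix w assume w: "w \<in> {w. y w \<noteq> 0}"
      then have nz: "y w \<noteq> 0" by simp
      have wIW: "w \<in> IW G" and wn: "set w \<subseteq> {..<n}" using nz yF unfolding FI_def isF_def by auto
      have deg: "int (length w) = k" using nz y(2) unfolding homogF_def by auto
      obtain a t c where atc: "t \<in> MinO G" "w = a @ t @ c" using MinO_cover[OF wIW] by blast
      have "a \<noteq> [] \<or> c \<noteq> []"
      proof (rule ccontr)
        assume "\<not> (a \<noteq> [] \<or> c \<noteq> [])"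
        then have "w \<in> Ok" using atc deg unfolding Ok_def by auto
        then show False using y(3) nz by auto
      qed
      then have p: "length a + length c > 0" by auto
      have "length w = length a + length t + length c" using atc by simp
      then have lt: "int (length t) < k" using deg p by linarith
      have tIW: "t \<in> IW G" using atc MinO_IW by blast
      have letters: "set a \<subseteq> {..<n}" "set t \<subseteq> {..<n}" "set c \<subseteq> {..<n}" using wn atc by auto
      have "mono t \<in> ?Y" using monoY[OF tIW letters(2) lt] .
      then have "fmul (mono a) (mono t) \<in> ?Y" by (rule tideal.lmul) (use letters in \<open>auto intro: isF_mono\<close>)
      then have "fmul (fmul (mono a) (mono t)) (mono c) \<in> ?Y" by (rule tideal.rmul) (use letters in \<open>auto intro: isF_mono\<close>)
      then have "mono w \<in> ?Y" by (simp only: atc append_assoc[symmetric] mono_app)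
      then have "fmul (cmono (y w) []) (mono w) \<in> ?Y" by (rule tideal.lmul) (simp add: isF_cmono)
      then show "cmono (y w) w \<in> ?Y" by (simp only: cmono_eq[of "y w" w])
    qed
    then show ?thesis by (subst decomp_F[OF fy order_refl])
  qed
  have ind: "pi b0 \<notin> fvs.span (pi ` (Bk - {b0}))" if b0: "b0 \<in> Bk" for b0
  proof
    assume "pi b0 \<in> fvs.span (pi ` (Bk - {b0}))"
    then obtain t r where tr: "finite t" "t \<subseteq> pi ` (Bk - {b0})" "pi b0 = (\<Sum>a\<in>t. scl (r a) a)"
      unfolding fvs.span_explicit by blast
    define h where "h = inv_into (Bk - {b0}) pi"
    have h: "h a \<in> Bk - {b0}" "pi (h a) = a" if "a \<in> t" for a
    proof -
      have a: "a \<in> pi ` (Bk - {b0})" using tr(2) that by blast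
      show "h a \<in> Bk - {b0}" unfolding h_def by (rule inv_into_into[OF a])
      show "pi (h a) = a" unfolding h_def by (rule f_inv_into_f[OF a])
    qed
    let ?Y = "tideal n (B - {b0})"
    define z where "z = (\<lambda>u. \<Sum>a\<in>t. fmul (cmono (r a) []) (h a) u)"
    have zY: "z \<in> ?Y" unfolding z_def
    proof (rule tideal_sum[OF tr(1)])
      fix a assume "a \<in> t"
      then have "h a \<in> B - {b0}" using h unfolding Bk_def by auto
      then have "h a \<in> ?Y" by (auto intro: tideal.gen)
      then show "fmul (cmono (r a) []) (h a) \<in> ?Y" by (rule tideal.lmul) (simp add: isF_cmono)
    qed
    have zval: "z u = (\<Sum>a\<in>t. r a * h a u)" for u
      unfolding z_def by (simp add: fmul_cmono_nil_left)
    define y where "y = (\<lambda>u. b0 u + fmul (cmono (-1) []) z u)"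
    have yval: "y u = b0 u - z u" for u unfolding y_def by (simp add: fmul_cmono_nil_left)
    have b0B: "b0 \<in> B" "homogF k b0" using b0 unfolding Bk_def by auto
    have "y \<in> tideal n B" unfolding y_def
    proof (rule tideal.add)
      show "b0 \<in> tideal n B" using b0B by (auto intro: tideal.gen)
      have "z \<in> tideal n B" using zY tideal_mono[of z n "B - {b0}" B] by blast
      then show "fmul (cmono (- 1) []) z \<in> tideal n B" by (rule tideal.lmul) (simp add: isF_cmono)
    qed
    then have yI: "y \<in> I" using IB by simp
    have yh: "homogF k y" unfolding homogF_def
    proof (intro allI impI)
      fix u assume "y u \<noteq> 0"
      then have "b0 u \<noteq> 0 \<or> z u \<noteq> 0" by (auto simp: yval)
      then show "int (length u) = k"
      proof
        assume "b0 u \<noteq> 0" then show ?thesis using b0B unfolding homogF_def by auto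
      next
        assume "z u \<noteq> 0"
        then have "(\<Sum>a\<in>t. r a * h a u) \<noteq> 0" by (simp add: zval)
        then obtain a where "a \<in> t" "r a * h a u \<noteq> 0" using sum_nz by blast
        then have "a \<in> t" "h a u \<noteq> 0" by auto
        then show ?thesis using h unfolding Bk_def homogF_def by blast
      qed
    qed
    have yv: "\<forall>w\<in>Ok. y w = 0"
    proof
      fix p assume p: "p \<in> Ok"
      have "pi b0 p = (\<Sum>a\<in>t. scl (r a) a) p" using tr(3) by simp
      also have "\<dots> = (\<Sum>a\<in>t. r a * a p)" using tr(1) by (simp add: sum_fun_apply scl_def)
      also have "\<dots> = (\<Sum>a\<in>t. r a * h a p)"
      proof (intro sum.cong refl)
        fix a assume a: "a \<in> t"
        have "a p = pi (h a) p" using h(2)[OF a] by simp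
        then show "r a * a p = r a * h a p" using p by (simp add: pi_def)
      qed
      finally have "b0 p = z p" using p by (simp add: pi_def zval)
      then show "y p = 0" by (simp add: yval)
    qed
    have "y \<in> ?Y" using key[OF b0 yI yh yv] .
    then have "(\<lambda>u. y u + z u) \<in> ?Y" using zY by (rule tideal.add)
    moreover have "(\<lambda>u. y u + z u) = b0" by (auto simp: yval fun_eq_iff)
    ultimately show False using irr b0B by auto
  qed
  have "finite Bk \<and> card Bk = card Ok"
  proof (rule count_lemma[OF finOk])
    show "\<And>b p. b \<in> Bk \<Longrightarrow> p \<notin> Ok \<Longrightarrow> pi b p = 0" by (simp add: pi_def)
  qed (use sp ind in auto)
  then show ?thesis unfolding Bk_def Ok_def by simp
qed



lemma len_bound:
  assumes w: "w \<notin> IW G" and v: "v \<notin> IW G" and wv: "w @ v \<in> IW G"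
    and mn: "\<forall>v' v''. v = v' @ v'' \<longrightarrow> v'' \<noteq> [] \<longrightarrow> w @ v' \<notin> IW G"
  shows "\<exists>t\<in>MinO G. length v < length t"
proof -
  obtain a t c where t: "t \<in> MinO G" and eq: "w @ v = a @ t @ c" using MinO_cover[OF wv] by blast
  have tI: "t \<in> IW G" using t MinO_IW by blast
  have c0: "c = []"
  proof (rule ccontr)
    assume cne: "c \<noteq> []"
    have eq2: "w @ v = (a @ t) @ c" using eq by simp
    obtain us where "(w = (a @ t) @ us \<and> us @ v = c) \<or> (w @ us = a @ t \<and> v = us @ c)"
      using eq2 unfolding append_eq_append_conv2 by blast
    then show False
    proof
      assume "w = (a @ t) @ us \<and> us @ v = c"
      then have "w = a @ t @ us" by simp
      then have "w \<in> IW G" using IW_app[OF tI] by simp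
      then show False using w by simp
    next
      assume h: "w @ us = a @ t \<and> v = us @ c"
      then have "w @ us \<in> IW G" using IW_appL[OF tI] by simp
      moreover have "v = us @ c" using h by simp
      ultimately show False using mn cne by blast
    qed
  qed
  have eq3: "w @ v = a @ t" using eq c0 by simp
  show ?thesis
  proof (rule ccontr)
    assume "\<not> (\<exists>t\<in>MinO G. length v < length t)"
    then have le: "length t \<le> length v" using t by auto
    obtain us where "(w = a @ us \<and> us @ v = t) \<or> (w @ us = a \<and> v = us @ t)"
      using eq3 unfolding append_eq_append_conv2 by blast
    then show False
    proof
      assume "w = a @ us \<and> us @ v = t"
      then have "length v \<le> length t" "us @ v = t" by auto
      then have "us = []" using le by auto
      then have "v = t" using \<open>w = a @ us \<and> us @ v = t\<close> by simp
      then show False using v tI by simp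
    next
      assume "w @ us = a \<and> v = us @ t"
      then have "v \<in> IW G" using IW_appL[OF tI] by simp
      then show False using v by simp
    qed
  qed
qed

lemma isFree_comp: "isFree n J x \<Longrightarrow> isF n (x j)"
proof -
  assume x: "isFree n J x"
  have "{w. x j w \<noteq> 0} \<subseteq> snd ` {(i, w). x i w \<noteq> 0}" by force
  then show "isF n (x j)" using x unfolding isFree_def isF_def by (auto intro: finite_subset)
qed

lemma isFree_sum:
  assumes "finite S" "\<And>j. j \<in> S \<Longrightarrow> isFree n J (h j)"
  shows "isFree n J (\<lambda>i w. \<Sum>j\<in>S. h j i w)"
  using assms
proof (induction S rule: finite_induct)
  case empty then show ?case by (simp add: isFree_zero)
next
  case (insert a F)
  then show ?case using isFree_add[of n J "h a" "\<lambda>i w. \<Sum>j\<in>F. h j i w"] by simp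
qed

lemma MinU_min: "(a, w) \<in> MinU G U \<Longrightarrow> w = u @ v \<Longrightarrow> v \<noteq> [] \<Longrightarrow> (a, u) \<notin> U"
  unfolding MinU_def by auto

lemma kernel:
  fixes x :: "nat \<Rightarrow> nat list \<Rightarrow> 'k::field"
  assumes bij: "bij_betw e {0..<c} (MinU G U)"
    and PU: "U \<subseteq> {(j, w). j \<in> J \<and> set w \<subseteq> {..<n}}"
    and G: "\<forall>g\<in>G. set g \<subseteq> {..<n}"
    and x: "isFree n {..<c} x"
  shows "dmap {..<c} (\<lambda>j. vec (fst (e j)) (snd (e j))) x \<in> Ipart n J (tideal n (mono ` G))
     \<longleftrightarrow> (\<forall>j v. x j v \<noteq> 0 \<longrightarrow> snd (e j) @ v \<in> IW G)"
proof -
  define Sx where "Sx = {j\<in>{..<c}. \<exists>u. x j u \<noteq> 0}"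
  have finSx: "finite Sx" unfolding Sx_def by auto
  have TI: "(tideal n (mono ` G) :: (nat list \<Rightarrow> 'k) set) = FI n G" by (rule tideal_char[OF G])
  have eM: "e j \<in> MinU G U" if "j < c" for j using bij that unfolding bij_betw_def by auto
  have eU: "e j \<in> U" if "j < c" for j using eM[OF that] MinU_sub by blast
  have eJ: "fst (e j) \<in> J \<and> set (snd (e j)) \<subseteq> {..<n}" if "j < c" for j
  proof -
    have "e j \<in> {(j, w). j \<in> J \<and> set w \<subseteq> {..<n}}" by (rule subsetD[OF PU eU[OF that]])
    then show ?thesis by (cases "e j") auto
  qed
  have einj: "inj_on e {0..<c}" using bij unfolding bij_betw_def by auto
  have dm: "dmap {..<c} (\<lambda>j. vec (fst (e j)) (snd (e j))) x
      = (\<lambda>i w. \<Sum>j\<in>Sx. ract (vec (fst (e j)) (snd (e j))) (x j) i w)"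
    unfolding dmap_def Sx_def by simp
  show ?thesis
  proof
    assume K: "dmap {..<c} (\<lambda>j. vec (fst (e j)) (snd (e j))) x \<in> Ipart n J (tideal n (mono ` G))"
    show "\<forall>j v. x j v \<noteq> 0 \<longrightarrow> snd (e j) @ v \<in> IW G"
    proof (intro allI impI)
      fix j v assume nz: "x j v \<noteq> 0"
      then have jc: "j < c" using x unfolding isFree_def by auto
      then have jS: "j \<in> Sx" using nz unfolding Sx_def by auto
      obtain a w0 where aw: "e j = (a, w0)" by (cases "e j")
      have val: "(\<Sum>j'\<in>Sx. ract (vec (fst (e j')) (snd (e j'))) (x j') a (w0 @ v)) = x j v"
      proof -
        have "(\<Sum>j'\<in>Sx. ract (vec (fst (e j')) (snd (e j'))) (x j') a (w0 @ v))
            = (\<Sum>j'\<in>Sx. if j' = j then x j v else 0)"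
        proof (intro sum.cong refl)
          fix j' assume j'S: "j' \<in> Sx"
          then have j'c: "j' < c" unfolding Sx_def by auto
          obtain a' w1 where aw': "e j' = (a', w1)" by (cases "e j'")
          show "ract (vec (fst (e j')) (snd (e j'))) (x j') a (w0 @ v) = (if j' = j then x j v else 0)"
          proof (cases "j' = j")
            case True then show ?thesis using aw by (simp add: ract_vec_left)
          next
            case False
            have nc: "\<not> (a = a' \<and> length w1 \<le> length (w0 @ v) \<and> take (length w1) (w0 @ v) = w1)"
            proof
              assume h: "a = a' \<and> length w1 \<le> length (w0 @ v) \<and> take (length w1) (w0 @ v) = w1"
              have m0: "(a, w0) \<in> MinU G U" using eM[OF jc] aw by simp
              have m1: "(a, w1) \<in> MinU G U" using eM[OF j'c] aw' h by simp
              show False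
              proof (cases "length w1 \<le> length w0")
                case True
                then have "w1 = take (length w1) w0" using h by simp
                then have w0eq: "w0 = w1 @ drop (length w1) w0" by (metis append_take_drop_id)
                show False
                proof (cases "drop (length w1) w0 = []")
                  case True
                  then have "w0 = w1" using w0eq by simp
                  then have "e j = e j'" using aw aw' h by simp
                  then have "j = j'" using einj jc j'c by (auto dest: inj_onD)
                  then show False using False by simp
                next
                  case False
                  then have "(a, w1) \<notin> U" using MinU_min[OF m0 w0eq] by simp
                  then show False using m1 MinU_sub by blast
                qed
              next
                case False
                then have "w1 = w0 @ take (length w1 - length w0) v" using h by (simp add: take_append)
                moreover have "take (length w1 - length w0) v \<noteq> []" using False h by auto
                ultimately have "(a, w0) \<notin> U" using MinU_min[OF m1] by blast
                then show False using m0 MinU_sub by blast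
              qed
            qed
            have "ract (vec (fst (e j')) (snd (e j'))) (x j') a (w0 @ v) = 0"
              unfolding ract_vec_left aw' fst_conv snd_conv by (rule if_not_P[OF nc])
            then show ?thesis using False by simp
          qed
        qed
        also have "\<dots> = x j v" using finSx jS by simp
        finally show ?thesis .
      qed
      have "dmap {..<c} (\<lambda>j. vec (fst (e j)) (snd (e j))) x a \<in> FI n G"
        using K TI unfolding Ipart_def by auto
      moreover have "dmap {..<c} (\<lambda>j. vec (fst (e j)) (snd (e j))) x a (w0 @ v) \<noteq> 0"
        using val nz dm by simp
      ultimately show "snd (e j) @ v \<in> IW G" using aw unfolding FI_def by auto
    qed
  next
    assume R: "\<forall>j v. x j v \<noteq> 0 \<longrightarrow> snd (e j) @ v \<in> IW G"
    have fr: "isFree n J (\<lambda>i w. \<Sum>j\<in>Sx. ract (vec (fst (e j)) (snd (e j))) (x j) i w)"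
    proof (rule isFree_sum[OF finSx])
      fix j assume "j \<in> Sx"
      then have jc: "j < c" unfolding Sx_def by auto
      have "isFree n J (vec (fst (e j)) (snd (e j)) :: nat \<Rightarrow> nat list \<Rightarrow> 'k)"
        using eJ[OF jc] by (simp add: vec_cvec isFree_cvec)
      then show "isFree n J (ract (vec (fst (e j)) (snd (e j))) (x j))"
        using isFree_ract isFree_comp[OF x] by blast
    qed
    have comp: "(\<lambda>w. \<Sum>j\<in>Sx. ract (vec (fst (e j)) (snd (e j))) (x j) i w) \<in> FI n G" for i
    proof -
      have "isF n (\<lambda>w. \<Sum>j\<in>Sx. ract (vec (fst (e j)) (snd (e j))) (x j) i w)"
        using isFree_comp[OF fr] by simp
      moreover have "w \<in> IW G" if nzw: "(\<Sum>j\<in>Sx. ract (vec (fst (e j)) (snd (e j))) (x j) i w) \<noteq> 0" for w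
      proof -
        obtain j where j: "j \<in> Sx" "ract (vec (fst (e j)) (snd (e j))) (x j) i w \<noteq> 0"
          using sum_nz[OF nzw] by blast
        then have h: "length (snd (e j)) \<le> length w" "take (length (snd (e j))) w = snd (e j)"
          "x j (drop (length (snd (e j))) w) \<noteq> 0"
          by (auto simp: ract_vec_left split: if_splits)
        then have "snd (e j) @ drop (length (snd (e j))) w \<in> IW G" using R by blast
        moreover have "snd (e j) @ drop (length (snd (e j))) w = w" using h(2) by (metis append_take_drop_id)
        ultimately show ?thesis by simp
      qed
      ultimately show ?thesis unfolding FI_def by blast
    qed
    show "dmap {..<c} (\<lambda>j. vec (fst (e j)) (snd (e j))) x \<in> Ipart n J (tideal n (mono ` G))"
      unfolding dm Ipart_def TI using fr comp by blast
  qed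
qed



lemma vecs_alt: "(\<lambda>(j, w). vec j w) ` S = vecs S"
  unfolding vecs_def by (rule image_cong) auto

lemma fin_Min_fg:
  fixes T0 :: "(nat \<Rightarrow> nat list \<Rightarrow> 'k::field) set"
  assumes G: "\<forall>g\<in>G. set g \<subseteq> {..<n}"
    and fT: "finite T0" "T0 \<subseteq> {x. isFree n J x}"
    and eqM: "VU n J (Cl n J G S) = rsub n (T0 \<union> Ipart n J (tideal n (mono ` G)))"
  shows "finite (MinU G (Cl n J G S))"
proof -
  define U where "U = Cl n J G S"
  define P where "P = Ipart n J (tideal n (mono ` G) :: (nat list \<Rightarrow> 'k) set)"
  have TI: "(tideal n (mono ` G) :: (nat list \<Rightarrow> 'k) set) = FI n G" by (rule tideal_char[OF G])
  have XU: "VU n J U = rsub n (T0 \<union> P)" using eqM unfolding U_def P_def .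
  have claim: "\<exists>t\<in>T0. t j w \<noteq> 0" if jw: "(j, w) \<in> MinU G U" for j w
  proof -
    have van: "x j (take m w) = 0" if "x \<in> VU n J U" "m < length w" for x :: "nat \<Rightarrow> nat list \<Rightarrow> 'k" and m
    proof -
      have e1: "w = take m w @ drop m w" by simp
      have e2: "drop m w \<noteq> []" using that(2) by simp
      have "(j, take m w) \<notin> U" by (rule MinU_min[OF jw e1 e2])
      then show ?thesis using that(1) unfolding VU_def by blast
    qed
    have ind: "y j w \<noteq> 0 \<longrightarrow> (\<exists>t\<in>T0. t j w \<noteq> 0)" if "y \<in> rsub n (T0 \<union> P)" for y
      using that
    proof (induction y rule: rsub.induct)
      case (gen x)
      then show ?case
      proof
        assume "x \<in> P"
        then have "x j \<in> FI n G" using TI unfolding P_def Ipart_def by auto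
        moreover have "w \<notin> IW G" using jw unfolding MinU_def by auto
        ultimately show ?thesis unfolding FI_def by auto
      next
        assume "x \<in> T0" then show ?thesis by blast
      qed
    next
      case zero then show ?case by simp
    next
      case (add x y)
      show ?case
      proof
        assume "x j w + y j w \<noteq> 0"
        then have "x j w \<noteq> 0 \<or> y j w \<noteq> 0" by auto
        then show "\<exists>t\<in>T0. t j w \<noteq> 0" using add.IH by blast
      qed
    next
      case (rmul x f)
      have "x \<in> VU n J U" using rmul.hyps XU by simp
      then have "ract x f j w = x j w * f []"
        unfolding ract_def by (subst sum_single_m[where k="length w"]) (auto simp: van)
      then show ?case using rmul.IH by simp
    qed
    have "(j, w) \<in> U" using jw MinU_sub by blast
    then have jJ: "j \<in> J" "set w \<subseteq> {..<n}" unfolding U_def Cl_def by auto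
    then have "isFree n J (vec j w :: nat \<Rightarrow> nat list \<Rightarrow> 'k)" by (simp add: vec_cvec isFree_cvec)
    then have "(vec j w :: nat \<Rightarrow> nat list \<Rightarrow> 'k) \<in> VU n J U"
      using \<open>(j, w) \<in> U\<close> unfolding VU_def by (auto simp: vec_def)
    then have "(vec j w :: nat \<Rightarrow> nat list \<Rightarrow> 'k) \<in> rsub n (T0 \<union> P)" using XU by simp
    moreover have "(vec j w j w :: 'k) \<noteq> 0" by (simp add: vec_def)
    ultimately show ?thesis using ind by simp
  qed
  have "MinU G U \<subseteq> (\<Union>t\<in>T0. {(j, w). t j w \<noteq> 0})"
  proof
    fix p assume "p \<in> MinU G U"
    then obtain j w where "p = (j, w)" "(j, w) \<in> MinU G U" by (cases p) auto
    then show "p \<in> (\<Union>t\<in>T0. {(j, w). t j w \<noteq> 0})" using claim by auto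
  qed
  moreover have "finite (\<Union>t\<in>T0. {(j, w). t j w \<noteq> 0})"
  proof (rule finite_UN_I[OF fT(1)])
    fix t assume "t \<in> T0" then show "finite {(j, w). t j w \<noteq> 0}" using fT(2) unfolding isFree_def by auto
  qed
  ultimately show ?thesis unfolding U_def by (rule finite_subset)
qed

definition enumM :: "nat list set \<Rightarrow> (nat \<times> nat list) set \<Rightarrow> nat \<Rightarrow> nat \<times> nat list" where
  "enumM G U = (SOME h. bij_betw h {0..<card (MinU G U)} (MinU G U))"

lemma enumM_bij: assumes "finite (MinU G U)" shows "bij_betw (enumM G U) {0..<card (MinU G U)} (MinU G U)"
proof -
  obtain h where "bij_betw h {0..<card (MinU G U)} (MinU G U)" using ex_bij_betw_nat_finite[OF assms] by blast
  then show ?thesis unfolding enumM_def by (rule someI[where P="\<lambda>h. bij_betw h {0..<card (MinU G U)} (MinU G U)"])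
qed

definition nxtU :: "nat \<Rightarrow> nat list set \<Rightarrow> (nat \<times> nat list) set \<Rightarrow> (nat \<times> nat list) set" where
  "nxtU n G U = {(j, v). j < card (MinU G U) \<and> set v \<subseteq> {..<n} \<and> snd (enumM G U j) @ v \<in> IW G}"

lemma Cl_nxtU: "Cl n {..<card (MinU G U)} G (nxtU n G U) = nxtU n G U"
proof
  show "Cl n {..<card (MinU G U)} G (nxtU n G U) \<subseteq> nxtU n G U"
  proof
    fix p assume p: "p \<in> Cl n {..<card (MinU G U)} G (nxtU n G U)"
    obtain i y where py: "p = (i, y)" by (cases p)
    have iy: "i < card (MinU G U)" "set y \<subseteq> {..<n}" using p py unfolding Cl_def by auto
    have "y \<in> IW G \<or> (\<exists>u v. (i, u) \<in> nxtU n G U \<and> y = u @ v)" using p py unfolding Cl_def by auto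
    then have "snd (enumM G U i) @ y \<in> IW G"
    proof
      assume "y \<in> IW G" then show ?thesis by (rule IW_appL)
    next
      assume "\<exists>u v. (i, u) \<in> nxtU n G U \<and> y = u @ v"
      then obtain u v where "snd (enumM G U i) @ u \<in> IW G" "y = u @ v" unfolding nxtU_def by auto
      then show ?thesis using IW_appR by fastforce
    qed
    then show "p \<in> nxtU n G U" using iy py unfolding nxtU_def by auto
  qed
next
  show "nxtU n G U \<subseteq> Cl n {..<card (MinU G U)} G (nxtU n G U)"
    by (rule Cl_incl) (auto simp: nxtU_def)
qed

lemma Cl_Cl: "Cl n J G (Cl n J G S) = Cl n J G S"
  using Cl_sub[of "Cl n J G S" n J G S] Cl_incl[OF Cl_range] by blast

lemma Min_nxt_bound:
  assumes fin: "finite (MinU G U)"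
    and p: "p \<in> MinU G (nxtU n G U)"
  shows "fst p < card (MinU G U) \<and> set (snd p) \<subseteq> {..<n} \<and>
         (\<exists>t\<in>MinO G. length (snd p) < length t)"
proof -
  obtain j v where pv: "p = (j, v)" by (cases p)
  have jv: "j < card (MinU G U)" "set v \<subseteq> {..<n}" "snd (enumM G U j) @ v \<in> IW G" "v \<notin> IW G"
    using p pv MinU_sub[of G "nxtU n G U"] unfolding nxtU_def MinU_def by auto
  have eM: "enumM G U j \<in> MinU G U" using enumM_bij[OF fin] jv(1) unfolding bij_betw_def by auto
  then have w: "snd (enumM G U j) \<notin> IW G" unfolding MinU_def by auto
  have mn: "\<forall>v' v''. v = v' @ v'' \<longrightarrow> v'' \<noteq> [] \<longrightarrow> snd (enumM G U j) @ v' \<notin> IW G"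
  proof (intro allI impI)
    fix v' v'' assume h: "v = v' @ v''" "v'' \<noteq> []"
    then have "(j, v') \<notin> nxtU n G U" using MinU_min p pv by blast
    then show "snd (enumM G U j) @ v' \<notin> IW G" using jv h unfolding nxtU_def by auto
  qed
  show ?thesis using len_bound[OF w jv(4) jv(3) mn] jv pv by simp
qed

lemma fin_Min_nxt:
  assumes fin: "finite (MinU G U)" and finG: "finite G"
  shows "finite (MinU G (nxtU n G U))"
proof -
  define L where "L = Max (length ` G)"
  have "MinU G (nxtU n G U) \<subseteq> {..<card (MinU G U)} \<times> {v. set v \<subseteq> {..<n} \<and> length v \<le> L}"
  proof
    fix p assume p: "p \<in> MinU G (nxtU n G U)"
    obtain t where t: "t \<in> MinO G" "length (snd p) < length t" using Min_nxt_bound[OF fin p] by blast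
    have "length t \<le> L" unfolding L_def using t(1) MinO_sub finG by (auto intro: Max_ge)
    then show "p \<in> {..<card (MinU G U)} \<times> {v. set v \<subseteq> {..<n} \<and> length v \<le> L}"
      using Min_nxt_bound[OF fin p] t by (cases p) auto
  qed
  moreover have "finite ({..<card (MinU G U)} \<times> {v. set v \<subseteq> {..<n} \<and> length v \<le> L})"
    by (intro finite_cartesian_product finite_lists_length_le) auto
  ultimately show ?thesis by (rule finite_subset)
qed



primrec UUf :: "nat \<Rightarrow> nat list set \<Rightarrow> (nat \<times> nat list) set \<Rightarrow> nat \<Rightarrow> (nat \<times> nat list) set" where
  "UUf n G U1 0 = U1"
| "UUf n G U1 (Suc k) = nxtU n G (UUf n G U1 k)"

primrec DDf :: "nat list set \<Rightarrow> (nat \<Rightarrow> (nat \<times> nat list) set) \<Rightarrow> (nat \<Rightarrow> int) \<Rightarrow> nat \<Rightarrow> nat \<Rightarrow> int" where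
  "DDf G UU \<delta> 0 = \<delta>"
| "DDf G UU \<delta> (Suc k) = (\<lambda>j. DDf G UU \<delta> k (fst (enumM G (UU k) j)) + int (length (snd (enumM G (UU k) j))))"

definition JJf :: "nat list set \<Rightarrow> (nat \<Rightarrow> (nat \<times> nat list) set) \<Rightarrow> nat \<Rightarrow> nat \<Rightarrow> nat set" where
  "JJf G UU r k = (case k of 0 \<Rightarrow> {..<r} | Suc k' \<Rightarrow> {..<card (MinU G (UU k'))})"

definition ggf :: "nat list set \<Rightarrow> (nat \<Rightarrow> (nat \<times> nat list) set) \<Rightarrow> nat \<Rightarrow> nat \<Rightarrow> nat \<Rightarrow> nat list \<Rightarrow> 'k::field" where
  "ggf G UU k j = (case k of 0 \<Rightarrow> (\<lambda>_ _. 0) | Suc k' \<Rightarrow> vec (fst (enumM G (UU k') j)) (snd (enumM G (UU k') j)))"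

lemma JJf_0: "JJf G UU r 0 = {..<r}" by (simp add: JJf_def)
lemma JJf_Suc: "JJf G UU r (Suc k) = {..<card (MinU G (UU k))}" by (simp add: JJf_def)
lemma ggf_Suc: "ggf G UU (Suc k) = (\<lambda>j. vec (fst (enumM G (UU k) j)) (snd (enumM G (UU k) j)))"
  by (simp add: ggf_def fun_eq_iff)

theorem mainTheorem16:
  fixes n r :: nat and I :: "(nat list \<Rightarrow> 'k::field) set"
    and \<delta> :: "nat \<Rightarrow> int" and M :: "(nat \<Rightarrow> nat list \<Rightarrow> 'k) set" and d \<Delta> :: int
  assumes "monomial_ideal_fg n I"
    and "fg_sub n {..<r} I M" and "monomial_sub n {..<r} I M"
  shows "\<exists>J D g. J 0 = {..<r} \<and> D 0 = \<delta> \<and>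
      graded_free_res n I J D g M \<and> minimal_res n I J D g \<and>
      (\<forall>i\<ge>1. fg_sub n (J (i - 1)) I (Msyz n I J g i) \<and>
              monomial_sub n (J (i - 1)) I (Msyz n I J g i)) \<and>
      ((\<forall>k>d. bI n k I = 0) \<and> (\<forall>k>\<Delta>. bM n {..<r} \<delta> I k M = 0) \<longrightarrow>
        (\<forall>i\<ge>1. \<forall>k. k > \<Delta> + (int i - 1) * (d - 1) \<longrightarrow>
           bM n (J (i - 1)) (D (i - 1)) I k (Msyz n I J g i) = 0))"
proof -
  obtain G where finG: "finite G" and G: "\<forall>g\<in>G. set g \<subseteq> {..<n}" and IG: "I = tideal n (mono ` G)"
    using assms(1) unfolding monomial_ideal_fg_def by blast
  obtain S0 where S0: "S0 \<subseteq> {(j, w). j \<in> {..<r} \<and> set w \<subseteq> {..<n}}"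
    and MS0: "M = rsub n ((\<lambda>(j, w). vec j w) ` S0 \<union> Ipart n {..<r} I)"
    using assms(3) unfolding monomial_sub_def by blast
  obtain T0 where fT0: "finite T0" "T0 \<subseteq> {x. isFree n {..<r} x}" and MT0: "M = rsub n (T0 \<union> Ipart n {..<r} I)"
    using assms(2) unfolding fg_sub_def by blast
  define U1 where "U1 = Cl n {..<r} G S0"
  have MV: "M = VU n {..<r} U1"
  proof -
    have "rsub n (vecs S0 \<union> Ipart n {..<r} (tideal n (mono ` G))) = (VU n {..<r} (Cl n {..<r} G S0) :: (nat \<Rightarrow> nat list \<Rightarrow> 'k) set)"
      by (rule rsub_char[OF G S0])
    then show ?thesis using MS0 IG unfolding U1_def by (simp add: vecs_alt)
  qed
  define UU where "UU = UUf n G U1"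
  define JJ where "JJ = JJf G UU r"
  define DD where "DD = DDf G UU \<delta>"
  define gg where "gg = (ggf G UU :: nat \<Rightarrow> nat \<Rightarrow> nat \<Rightarrow> nat list \<Rightarrow> 'k)"
  have JJ0: "JJ 0 = {..<r}" unfolding JJ_def by (simp add: JJf_0)
  have JJS: "JJ (Suc k) = {..<card (MinU G (UU k))}" for k unfolding JJ_def by (simp add: JJf_Suc)
  have UUS: "UU (Suc k) = nxtU n G (UU k)" for k unfolding UU_def by simp
  have UU0: "UU 0 = U1" unfolding UU_def by simp
  have DDS: "DD (Suc k) j = DD k (fst (enumM G (UU k) j)) + int (length (snd (enumM G (UU k) j)))" for k j
    unfolding DD_def by simp
  have ggS: "gg (Suc k) = (\<lambda>j. vec (fst (enumM G (UU k) j)) (snd (enumM G (UU k) j)))" for k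
    unfolding gg_def by (rule ggf_Suc)
  have INV: "UU k \<subseteq> {(j, w). j \<in> JJ k \<and> set w \<subseteq> {..<n}} \<and> Cl n (JJ k) G (UU k) = UU k \<and> finite (MinU G (UU k))" for k
  proof (induction k)
    case 0
    have "finite (MinU G (Cl n {..<r} G S0))"
    proof (rule fin_Min_fg[OF G fT0])
      show "VU n {..<r} (Cl n {..<r} G S0) = rsub n (T0 \<union> Ipart n {..<r} (tideal n (mono ` G)))"
        using MV MT0 IG unfolding U1_def by simp
    qed
    then show ?case unfolding UU0 JJ0 U1_def using Cl_range Cl_Cl by blast
  next
    case (Suc k)
    have "UU (Suc k) \<subseteq> {(j, w). j \<in> JJ (Suc k) \<and> set w \<subseteq> {..<n}}"
      unfolding UUS JJS nxtU_def by auto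
    moreover have "Cl n (JJ (Suc k)) G (UU (Suc k)) = UU (Suc k)" unfolding UUS JJS by (rule Cl_nxtU)
    moreover have "finite (MinU G (UU (Suc k)))" unfolding UUS using fin_Min_nxt Suc.IH finG by blast
    ultimately show ?case by blast
  qed
  have bij: "bij_betw (enumM G (UU k)) {0..<card (MinU G (UU k))} (MinU G (UU k))" for k
    using enumM_bij INV by blast
  have img: "gg (Suc k) ` JJ (Suc k) = vecs (MinU G (UU k))" for k
  proof -
    have "gg (Suc k) ` JJ (Suc k) = (\<lambda>p. vec (fst p) (snd p)) ` (enumM G (UU k) ` {0..<card (MinU G (UU k))})"
      unfolding ggS JJS by (auto simp: atLeast0LessThan)
    also have "\<dots> = vecs (MinU G (UU k))"
      using bij[of k] unfolding bij_betw_def vecs_def by simp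
    finally show ?thesis .
  qed
  have MinR: "MinU G (UU k) \<subseteq> {(j, w). j \<in> JJ k \<and> set w \<subseteq> {..<n}}" for k
    using INV MinU_sub by blast
  have MSY: "Msyz n I JJ gg (Suc k) = VU n (JJ k) (UU k)" for k
  proof -
    have "Msyz n I JJ gg (Suc k) = rsub n (vecs (MinU G (UU k)) \<union> Ipart n (JJ k) (tideal n (mono ` G)))"
      unfolding Msyz_def img IG by simp
    also have "\<dots> = VU n (JJ k) (Cl n (JJ k) G (MinU G (UU k)))" by (rule rsub_char[OF G MinR])
    also have "Cl n (JJ k) G (MinU G (UU k)) = UU k"
      using Cl_Min[of n "JJ k" G "UU k"] INV[of k] by simp
    finally show ?thesis .
  qed
  have MSY': "Msyz n I JJ gg i = VU n (JJ (i - 1)) (UU (i - 1))" if "i \<ge> 1" for i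
    using MSY[of "i - 1"] that by simp
  have gfr: "graded_free_res n I JJ DD gg M"
    unfolding graded_free_res_def
  proof (intro conjI allI impI ballI)
    fix k j assume k: "k \<ge> 1" and j: "j \<in> JJ k"
    obtain k' where k': "k = Suc k'" using k by (cases k) auto
    have ej: "enumM G (UU k') j \<in> MinU G (UU k')" using bij[of k'] j k' JJS unfolding bij_betw_def by auto
    then have "fst (enumM G (UU k') j) \<in> JJ k' \<and> set (snd (enumM G (UU k') j)) \<subseteq> {..<n}"
      using MinR[of k'] by (cases "enumM G (UU k') j") auto
    then show "isFree n (JJ (k - 1)) (gg k j)" using k' ggS by (simp add: vec_cvec isFree_cvec)
    show "homog (DD (k - 1)) (DD k j) (gg k j)" using k' ggS DDS homog_vec by simp
  next
    show "Msyz n I JJ gg 1 = M" using MSY[of 0] UU0 JJ0 MV by simp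
  next
    fix k :: nat assume k: "k \<ge> 1"
    obtain k' where k': "k = Suc k'" using k by (cases k) auto
    show "Msyz n I JJ gg (Suc k) = {x. isFree n (JJ k) x \<and> dmap (JJ k) (gg k) x \<in> Ipart n (JJ (k - 1)) I}"
    proof -
      have "{x. isFree n (JJ k) x \<and> dmap (JJ k) (gg k) x \<in> Ipart n (JJ (k - 1)) I}
          = {x. isFree n (JJ k) x \<and> (\<forall>j v. x j v \<noteq> 0 \<longrightarrow> snd (enumM G (UU k') j) @ v \<in> IW G)}"
      proof (intro Collect_cong conj_cong refl)
        fix x :: "nat \<Rightarrow> nat list \<Rightarrow> 'k" assume x: "isFree n (JJ k) x"
        show "dmap (JJ k) (gg k) x \<in> Ipart n (JJ (k - 1)) I
          \<longleftrightarrow> (\<forall>j v. x j v \<noteq> 0 \<longrightarrow> snd (enumM G (UU k') j) @ v \<in> IW G)"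
          using kernel[OF bij[of k'] _ G, of "JJ k'" x] INV[of k'] x k' JJS ggS IG by simp
      qed
      also have "\<dots> = VU n (JJ k) (UU k)"
        unfolding VU_def k' UUS nxtU_def JJS isFree_def by auto
      finally show ?thesis using MSY[of k] by simp
    qed
  qed
  have mres: "minimal_res n I JJ DD gg"
    unfolding minimal_res_def
  proof (intro allI impI conjI)
    fix k :: nat assume k: "k \<ge> 1"
    obtain k' where k': "k = Suc k'" using k by (cases k) auto
    show "inj_on (gg k) (JJ k)"
    proof (rule inj_onI)
      fix a b assume ab: "a \<in> JJ k" "b \<in> JJ k" "gg k a = gg k b"
      then have "enumM G (UU k') a = enumM G (UU k') b" using k' ggS vec_inj by (simp add: prod_eq_iff)
      then show "a = b" using bij[of k'] ab k' JJS unfolding bij_betw_def by (auto dest: inj_onD)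
    qed
    have "minbasis n (JJ k') (DD k') (tideal n (mono ` G)) (VU n (JJ k') (Cl n (JJ k') G (UU k')))
           (vecs (MinU G (Cl n (JJ k') G (UU k'))) :: (nat \<Rightarrow> nat list \<Rightarrow> 'k) set)"
      by (rule minbasis_Min[OF G]) (use INV in blast)
    then show "minbasis n (JJ (k - 1)) (DD (k - 1)) I (Msyz n I JJ gg k) (gg k ` JJ k)"
      using INV[of k'] k' MSY[of k'] img[of k'] IG by simp
  qed
  have fgm: "\<forall>i\<ge>1. fg_sub n (JJ (i - 1)) I (Msyz n I JJ gg i) \<and> monomial_sub n (JJ (i - 1)) I (Msyz n I JJ gg i)"
  proof (intro allI impI conjI)
    fix i :: nat assume i: "i \<ge> 1"
    obtain k' where k': "i = Suc k'" using i by (cases i) auto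
    have ms: "Msyz n I JJ gg i = rsub n (vecs (MinU G (UU k')) \<union> Ipart n (JJ k') I)"
      unfolding Msyz_def k' img by simp
    show "fg_sub n (JJ (i - 1)) I (Msyz n I JJ gg i)"
      unfolding fg_sub_def
    proof (intro exI conjI)
      show "finite (vecs (MinU G (UU k')) :: (nat \<Rightarrow> nat list \<Rightarrow> 'k) set)"
        unfolding vecs_def using INV by blast
      show "(vecs (MinU G (UU k')) :: (nat \<Rightarrow> nat list \<Rightarrow> 'k) set) \<subseteq> {x. isFree n (JJ (i - 1)) x}"
      proof
        fix x :: "nat \<Rightarrow> nat list \<Rightarrow> 'k" assume "x \<in> vecs (MinU G (UU k'))"
        then obtain a w where "(a, w) \<in> MinU G (UU k')" "x = vec a w" unfolding vecs_def by auto
        moreover then have "a \<in> JJ k'" "set w \<subseteq> {..<n}" using MinR[of k'] by auto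
        ultimately show "x \<in> {x. isFree n (JJ (i - 1)) x}" using k' by (simp add: vec_cvec isFree_cvec)
      qed
      show "Msyz n I JJ gg i = rsub n (vecs (MinU G (UU k')) \<union> Ipart n (JJ (i - 1)) I)" using ms k' by simp
    qed
    show "monomial_sub n (JJ (i - 1)) I (Msyz n I JJ gg i)"
      unfolding monomial_sub_def
    proof (intro exI[of _ "MinU G (UU k')"] conjI)
      show "MinU G (UU k') \<subseteq> {(j, w). j \<in> JJ (i - 1) \<and> set w \<subseteq> {..<n}}" using MinR k' by simp
      show "Msyz n I JJ gg i = rsub n ((\<lambda>(j, w). vec j w) ` MinU G (UU k') \<union> Ipart n (JJ (i - 1)) I)"
        unfolding vecs_alt using ms k' by simp
    qed
  qed
  have deg: "(\<forall>k>d. bI n k I = 0) \<and> (\<forall>k>\<Delta>. bM n {..<r} \<delta> I k M = 0) \<longrightarrow>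
        (\<forall>i\<ge>1. \<forall>k. k > \<Delta> + (int i - 1) * (d - 1) \<longrightarrow>
           bM n (JJ (i - 1)) (DD (i - 1)) I k (Msyz n I JJ gg i) = 0)"
  proof (rule impI)
    assume H: "(\<forall>k>d. bI n k I = 0) \<and> (\<forall>k>\<Delta>. bM n {..<r} \<delta> I k M = 0)"
    have dO: "int (length t) \<le> d" if t: "t \<in> MinO G" for t
    proof (rule ccontr)
      assume "\<not> int (length t) \<le> d"
      then have k: "int (length t) > d" by simp
      define B where "B = (SOME B. minbasis_ideal n I B)"
      have "minbasis_ideal n I (mono ` MinO G)" using minbasis_MinO[OF G] IG by simp
      then have mB: "minbasis_ideal n I B" unfolding B_def by (rule someI)
      have c: "finite {b\<in>B. homogF (int (length t)) b} \<and> card {b\<in>B. homogF (int (length t)) b}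
               = card {s\<in>MinO G. int (length s) = int (length t)}"
        using count_I[OF G finG] mB IG by blast
      have "bI n (int (length t)) I = 0" using H k by blast
      then have "card {s\<in>MinO G. int (length s) = int (length t)} = 0"
        using c unfolding bI_def B_def by simp
      moreover have "finite {s\<in>MinO G. int (length s) = int (length t)}"
        using finG MinO_sub by (auto intro: finite_subset)
      ultimately show False using t by auto
    qed
    have dM: "\<delta> (fst p) + int (length (snd p)) \<le> \<Delta>" if p: "p \<in> MinU G U1" for p
    proof (rule ccontr)
      assume "\<not> \<delta> (fst p) + int (length (snd p)) \<le> \<Delta>"
      then have k: "\<delta> (fst p) + int (length (snd p)) > \<Delta>" by simp
      define k where "k = \<delta> (fst p) + int (length (snd p))"
      define B where "B = (SOME B. minbasis n {..<r} \<delta> I M B)"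
      have "minbasis n {..<r} \<delta> (tideal n (mono ` G)) (VU n {..<r} (Cl n {..<r} G S0))
             (vecs (MinU G (Cl n {..<r} G S0)) :: (nat \<Rightarrow> nat list \<Rightarrow> 'k) set)"
        by (rule minbasis_Min[OF G S0])
      then have "minbasis n {..<r} \<delta> I M (vecs (MinU G (Cl n {..<r} G S0)))"
        using MV IG unfolding U1_def by simp
      then have mB: "minbasis n {..<r} \<delta> I M B" unfolding B_def by (rule someI)
      have finM: "finite (MinU G (Cl n {..<r} G S0))" using INV[of 0] UU0 unfolding U1_def by simp
      have c: "finite {b\<in>B. homog \<delta> k b} \<and> card {b\<in>B. homog \<delta> k b}
               = card {p\<in>MinU G (Cl n {..<r} G S0). \<delta> (fst p) + int (length (snd p)) = k}"
        by (rule count_M[OF G S0 finM]) (use mB MV IG U1_def in simp)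
      have "bM n {..<r} \<delta> I k M = 0" using H k unfolding k_def by blast
      then have "card {p\<in>MinU G (Cl n {..<r} G S0). \<delta> (fst p) + int (length (snd p)) = k} = 0"
        using c unfolding bM_def B_def by simp
      moreover have "finite {p\<in>MinU G (Cl n {..<r} G S0). \<delta> (fst p) + int (length (snd p)) = k}"
        using finM by auto
      ultimately have "{p\<in>MinU G (Cl n {..<r} G S0). \<delta> (fst p) + int (length (snd p)) = k} = {}" by simp
      then show False using p unfolding k_def U1_def by blast
    qed
    have dK: "\<forall>p\<in>MinU G (UU k). DD k (fst p) + int (length (snd p)) \<le> \<Delta> + int k * (d - 1)" for k
    proof (induction k)
      case 0 then show ?case using dM UU0 unfolding DD_def by simp
    next
      case (Suc k)
      show ?case
      proof
        fix p assume p: "p \<in> MinU G (UU (Suc k))"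
        have fin: "finite (MinU G (UU k))" using INV by blast
        have pb: "fst p < card (MinU G (UU k)) \<and> set (snd p) \<subseteq> {..<n} \<and> (\<exists>t\<in>MinO G. length (snd p) < length t)"
          using Min_nxt_bound[OF fin] p UUS by simp
        then obtain t where t: "t \<in> MinO G" "length (snd p) < length t" by blast
        have lv: "int (length (snd p)) \<le> d - 1" using dO[OF t(1)] t(2) by simp
        have "enumM G (UU k) (fst p) \<in> MinU G (UU k)" using bij[of k] pb unfolding bij_betw_def by auto
        then have "DD k (fst (enumM G (UU k) (fst p))) + int (length (snd (enumM G (UU k) (fst p)))) \<le> \<Delta> + int k * (d - 1)"
          using Suc.IH by blast
        then have "DD (Suc k) (fst p) \<le> \<Delta> + int k * (d - 1)" using DDS by simp
        then show "DD (Suc k) (fst p) + int (length (snd p)) \<le> \<Delta> + int (Suc k) * (d - 1)"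
          using lv by (simp add: algebra_simps)
      qed
    qed
    show "\<forall>i\<ge>1. \<forall>k. k > \<Delta> + (int i - 1) * (d - 1) \<longrightarrow> bM n (JJ (i - 1)) (DD (i - 1)) I k (Msyz n I JJ gg i) = 0"
    proof (intro allI impI)
      fix i :: nat and k :: int
      assume i: "1 \<le> i" and kb: "\<Delta> + (int i - 1) * (d - 1) < k"
      obtain k' where k': "i = Suc k'" using i by (cases i) auto
      have UC: "Cl n (JJ k') G (UU k') = UU k'" using INV by blast
      have UR: "UU k' \<subseteq> {(j, w). j \<in> JJ k' \<and> set w \<subseteq> {..<n}}" using INV by blast
      define B where "B = (SOME B. minbasis n (JJ k') (DD k') I (Msyz n I JJ gg i) B)"
      have "minbasis n (JJ k') (DD k') (tideal n (mono ` G)) (VU n (JJ k') (Cl n (JJ k') G (UU k')))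
             (vecs (MinU G (Cl n (JJ k') G (UU k'))) :: (nat \<Rightarrow> nat list \<Rightarrow> 'k) set)"
        by (rule minbasis_Min[OF G UR])
      then have "minbasis n (JJ k') (DD k') I (Msyz n I JJ gg i) (vecs (MinU G (Cl n (JJ k') G (UU k'))))"
        using MSY[of k'] k' IG UC by simp
      then have mB: "minbasis n (JJ k') (DD k') I (Msyz n I JJ gg i) B" unfolding B_def by (rule someI)
      have finM: "finite (MinU G (Cl n (JJ k') G (UU k')))" using INV UC by simp
      have c: "finite {b\<in>B. homog (DD k') k b} \<and> card {b\<in>B. homog (DD k') k b}
               = card {p\<in>MinU G (Cl n (JJ k') G (UU k')). DD k' (fst p) + int (length (snd p)) = k}"
        by (rule count_M[OF G UR finM]) (use mB MSY k' IG UC in simp)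
      have E: "{p\<in>MinU G (Cl n (JJ k') G (UU k')). DD k' (fst p) + int (length (snd p)) = k} = {}"
      proof -
        have "int i - 1 = int k'" using k' by simp
        then show ?thesis using dK[of k'] kb UC by fastforce
      qed
      have c0: "card {p\<in>MinU G (Cl n (JJ k') G (UU k')). DD k' (fst p) + int (length (snd p)) = k} = 0"
        unfolding E by simp
      have "card {b\<in>B. homog (DD k') k b} = 0" using c c0 by metis
      then show "bM n (JJ (i - 1)) (DD (i - 1)) I k (Msyz n I JJ gg i) = 0"
        using k' unfolding bM_def B_def by simp
    qed
  qed
  show ?thesis
    by (rule exI[of _ JJ], rule exI[of _ DD], rule exI[of _ gg])
      (use JJ0 gfr mres fgm deg in \<open>simp add: DD_def\<close>)
qed


end
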